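(* In the setting described in the context, suppose that $(T_{\lambda,\sigma})$ has an elliptic anomaly of first order and $\mathcal K$th kind, and that the basis change $M$ is such that $\mathbf E(p_{\mathcal K,\sigma}(\theta))=\mu$ is a constant (independent of $\theta$), $\mu\neq 0$. Let $\tilde{\mathcal K}>\mathcal K$ be the index of the first $k>\mathcal K$ with $\mathbf E(P_{\eta_k,\sigma})\neq 0$ and $\mathcal K'=\min\{\tilde{\mathcal K},K\}$. Then for every $f\in C^1(S^1_\pi)$, $$I_N(f)=\int_0^\pi\frac{d\theta}{\pi}\,f(\theta)+\mathcal O\big(\lambda^{\eta_{\mathcal K'}-\eta_{\mathcal K}},(\lambda^{\eta_{\mathcal K}}N)^{-1}\big),$$ where the error is bounded by a constant (independent of $N$) times $\lambda^{\eta_{\mathcal K'}-\eta_{\mathcal K}}+(\lambda^{\eta_{\mathcal K}}N)^{-1}$ for small $\lambda>0$.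
   Context: Let $(\Sigma,\mathbf p)$ be a probability space and $(T_{\lambda,\sigma})_{\lambda\in\mathbb R,\sigma\in\Sigma}$ a family in $SL(2,\mathbb R)$, with compact support (uniformly bounded) for small $\lambda$, whose $\lambda$-dependence is a power series with nonnegative (not necessarily integer) exponents. Suppose for a fixed $M\in SL(2,\mathbb R)$ independent of $\lambda,\sigma$: $MT_{\lambda,\sigma}M^{-1}=\pm\exp\big(\sum_{k\ge1}\lambda^{\eta_k}P_{\eta_k,\sigma}\big)$ with $P_{\eta_k,\sigma}\in sl(2,\mathbb R)$, $0<\eta_1<\eta_2<\cdots$, an index $K$ with $\eta_K=2\eta_1$, $\eta_{K+1}\le\eta_1+\eta_2$, and $\mathbf p(P_{\eta_k,\sigma}=0)<1$ for $k=1,\ldots,K-1$. (Then $T_{0,\sigma}=\pm\mathbf 1$: $\lambda=0$ is an anomaly.) The anomaly is of first order and $\mathcal K$th kind if $\mathcal K<K$, $\mathbf E(P_{\eta_k,\sigma})=0$ for $k<\mathcal K$ and $\mathbf E(P_{\eta_{\mathcal K},\sigma})\neq0$; it is elliptic if $\det\mathbf E(P_{\eta_{\mathcal K},\sigma})>0$. For $P_{\eta_k,\sigma}=\begin{pmatrix}a&b\\c&-a\end{pmatrix}$ put $p_{k,\sigma}(\theta)=c\cos^2\theta-b\sin^2\theta-a\sin(2\theta)$. $S^1_\pi=\mathbb R/\pi\mathbb Z$; for $T\in SL(2,\mathbb R)$ the map $\mathcal S_T:S^1_\pi\to S^1_\pi$ is defined by $e_{\mathcal S_T(\theta)}=\pm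 Te_\theta/\|Te_\theta\|$, $e_\theta=(\cos\theta,\sin\theta)^T$; $\mathcal S_{\lambda,\sigma}=\mathcal S_{MT_{\lambda,\sigma}M^{-1}}$. With $(\sigma_n)_{n\ge1}$ i.i.d. of law $\mathbf p$ and $\theta_0\in S^1_\pi$, set $\theta_{n+1}=\mathcal S_{\lambda,\sigma_{n+1}}(\theta_n)$ and, for $\pi$-periodic $f$, $I_N(f)=\frac1N\mathbf E\sum_{n=0}^{N-1}f(\theta_n)$. $\mathbf E$ denotes expectation over the randomness. *)

theory Defs
  imports "HOL-Analysis.Analysis" "HOL-Probability.Probability"
begin

type_synonym mat2 = "real^2^2"

primrec mpow :: "mat2 \<Rightarrow> nat \<Rightarrow> mat2" where
  "mpow A 0 = mat 1"
| "mpow A (Suc n) = A ** mpow A n"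

definition mexp :: "mat2 \<Rightarrow> mat2" where
  "mexp A = (\<Sum>n. (1 / fact n) *\<^sub>R mpow A n)"

definition evec :: "real \<Rightarrow> real^2" where
  "evec \<theta> = vector [cos \<theta>, sin \<theta>]"

text \<open>Projective action S_T on S^1_pi; angles are represented by reals, the
  result is a representative (in (-pi,pi]) of the class mod pi of the angle of T e_theta.\<close>
definition Smap :: "mat2 \<Rightarrow> real \<Rightarrow> real" where
  "Smap A \<theta> = Arg (Complex ((A *v evec \<theta>) $ 1) ((A *v evec \<theta>) $ 2))"

text \<open>p_{k,sigma}(theta) for P = [[a,b],[c,-a]].\<close>
definition pfun :: "mat2 \<Rightarrow> real \<Rightarrow> real" where
  "pfun A \<theta> = A $ 2 $ 1 * (cos \<theta>)\<^sup>2 - A $ 1 $ 2 * (sin \<theta>)\<^sup>2 - A $ 1 $ 1 * sin (2 * \<theta>)"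

primrec theta_seq :: "('s \<Rightarrow> real \<Rightarrow> real) \<Rightarrow> real \<Rightarrow> (nat \<Rightarrow> 's) \<Rightarrow> nat \<Rightarrow> real" where
  "theta_seq S \<theta>0 \<omega> 0 = \<theta>0"
| "theta_seq S \<theta>0 \<omega> (Suc n) = S (\<omega> (Suc n)) (theta_seq S \<theta>0 \<omega> n)"

definition I_N :: "'s measure \<Rightarrow> ('s \<Rightarrow> real \<Rightarrow> real) \<Rightarrow> real \<Rightarrow> (real \<Rightarrow> real) \<Rightarrow> nat \<Rightarrow> real" where
  "I_N p S \<theta>0 f N = (1 / real N) *
     (\<Sum>n<N. integral\<^sup>L (PiM UNIV (\<lambda>_. p)) (\<lambda>\<omega>. f (theta_seq S \<theta>0 \<omega> n)))"

end

theory Submission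
  imports Defs
begin

definition nm :: "mat2 \<Rightarrow> real" where
  "nm A = (\<Sum>i\<in>UNIV. \<Sum>j\<in>UNIV. \<bar>A $ i $ j\<bar>)"

lemma nm_2: "nm A = \<bar>A$1$1\<bar> + \<bar>A$1$2\<bar> + \<bar>A$2$1\<bar> + \<bar>A$2$2\<bar>"
  by (simp add: nm_def sum_2)

lemma nm_nonneg: "0 \<le> nm A" by (simp add: nm_2)

lemma entry_le_norm: "\<bar>(A::mat2) $ i $ j\<bar> \<le> norm A"
  using component_le_norm_cart[of "A $ i" j] Finite_Cartesian_Product.norm_nth_le[of A i] by linarith

lemma nm_le_norm: "nm A \<le> 4 * norm A"
  using entry_le_norm[of A 1 1] entry_le_norm[of A 1 2] entry_le_norm[of A 2 1] entry_le_norm[of A 2 2]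
  by (simp add: nm_2)

lemma norm_le_nm: "norm A \<le> nm A"
proof -
  have "norm A \<le> (\<Sum>i\<in>UNIV. norm (A $ i))"
    unfolding norm_vec_def by (rule L2_set_le_sum) simp
  also have "\<dots> \<le> (\<Sum>i\<in>UNIV. \<Sum>j\<in>UNIV. \<bar>A $ i $ j\<bar>)"
    by (intro sum_mono norm_le_l1_cart)
  finally show ?thesis by (simp add: nm_def)
qed

lemma nm_add: "nm (A + B) \<le> nm A + nm B"
  using abs_triangle_ineq[of "A$1$1" "B$1$1"] abs_triangle_ineq[of "A$1$2" "B$1$2"]
    abs_triangle_ineq[of "A$2$1" "B$2$1"] abs_triangle_ineq[of "A$2$2" "B$2$2"]
  by (simp add: nm_2)

lemma nm_scale: "nm (c *\<^sub>R A) = \<bar>c\<bar> * nm A"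
  by (simp add: nm_2 abs_mult algebra_simps)

lemma nm_mat1: "nm (mat 1) = 2"
  by (simp add: nm_2 mat_def)

lemma nm_mult: "nm (A ** B) \<le> nm A * nm B"
proof -
  have "nm (A ** B) = (\<Sum>i\<in>UNIV. \<Sum>j\<in>UNIV. \<bar>\<Sum>k\<in>UNIV. A$i$k * B$k$j\<bar>)"
    by (simp add: nm_def matrix_matrix_mult_def)
  also have "\<dots> \<le> (\<Sum>i\<in>UNIV. \<Sum>j\<in>UNIV. \<Sum>k\<in>UNIV. \<bar>A$i$k\<bar> * \<bar>B$k$j\<bar>)"
    by (intro sum_mono) (simp add: order.trans[OF sum_abs] abs_mult)
  also have "\<dots> = (\<Sum>i\<in>UNIV. \<Sum>k\<in>UNIV. \<bar>A$i$k\<bar> * (\<Sum>j\<in>UNIV. \<bar>B$k$j\<bar>))"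
    by (simp add: sum_distrib_left) (rule sum.cong[OF refl], rule sum.swap)
  also have "\<dots> \<le> (\<Sum>i\<in>UNIV. \<Sum>k\<in>UNIV. \<bar>A$i$k\<bar> * nm B)"
  proof (intro sum_mono mult_left_mono)
    fix k
    show "(\<Sum>j\<in>UNIV. \<bar>B$k$j\<bar>) \<le> nm B"
      unfolding nm_def by (rule member_le_sum) auto
  qed auto
  also have "\<dots> = nm A * nm B"
    by (simp add: nm_def sum_distrib_right)
  finally show ?thesis .
qed

lemma nm_mpow: "nm (mpow X n) \<le> 2 * nm X ^ n"
proof (induction n)
  case 0 then show ?case by (simp add: nm_mat1)
next
  case (Suc n)
  have "nm (mpow X (Suc n)) \<le> nm X * nm (mpow X n)" by (simp add: nm_mult)
  also have "\<dots> \<le> nm X * (2 * nm X ^ n)" by (intro mult_left_mono Suc nm_nonneg)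
  finally show ?case by (simp add: algebra_simps)
qed

lemma mexp_expand:
  assumes r1: "nm X \<le> 1"
  shows "\<exists>R. mexp X = mat 1 + X + R \<and> nm R \<le> 24 * (nm X)\<^sup>2"
proof -
  define r where "r = nm X"
  have r0: "0 \<le> r" by (simp add: r_def nm_nonneg)
  define F where "F n = (1 / fact n) *\<^sub>R mpow X n" for n
  define G where "G n = 2 * (r ^ n / fact n)" for n
  have sG0: "summable (\<lambda>n. r ^ n / fact n)"
    using summable_exp_generic[of r] by (simp add: divide_inverse mult.commute)
  have sG: "summable G" unfolding G_def using sG0 by (rule summable_mult)
  have nF: "norm (F n) \<le> G n" for n
  proof -
    have "norm (F n) \<le> nm (F n)" by (rule norm_le_nm)
    also have "\<dots> = (1 / fact n) * nm (mpow X n)" by (simp add: F_def nm_scale)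
    also have "\<dots> \<le> (1 / fact n) * (2 * r ^ n)"
      by (intro mult_left_mono) (auto simp: r_def nm_mpow)
    finally show ?thesis by (simp add: G_def)
  qed
  have snF: "summable (\<lambda>n. norm (F n))"
    by (rule summable_comparison_test[OF _ sG]) (use nF in auto)
  have sF: "summable F" by (rule summable_norm_cancel[OF snF])
  define R where "R = (\<Sum>n. F (n + 2))"
  have "mexp X = R + (\<Sum>i<2. F i)"
    unfolding mexp_def R_def F_def[symmetric] by (rule suminf_split_initial_segment[OF sF])
  also have "(\<Sum>i<2. F i) = mat 1 + X"
    by (simp add: F_def numeral_2_eq_2)
  finally have e1: "mexp X = mat 1 + X + R" by simp
  have snF2: "summable (\<lambda>n. norm (F (n + 2)))" using snF summable_iff_shift[of "\<lambda>n. norm (F n)" 2] by blast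
  have "norm R \<le> (\<Sum>n. norm (F (n + 2)))"
    unfolding R_def by (rule summable_norm[OF snF2])
  also have "\<dots> \<le> (\<Sum>n. G (n + 2))"
    by (rule suminf_le) (use nF snF2 sG summable_iff_shift[of G 2] in auto)
  also have "\<dots> \<le> (\<Sum>n. (2 * r\<^sup>2) * (r ^ n / fact n))"
  proof (rule suminf_le)
    show "summable (\<lambda>n. G (n + 2))" using sG summable_iff_shift[of G 2] by blast
    show "summable (\<lambda>n. (2 * r\<^sup>2) * (r ^ n / fact n))" using sG0 by (rule summable_mult)
    fix n
    have "fact n \<le> (fact (n + 2) :: real)" by (intro fact_mono) auto
    then have "r ^ n / fact (n + 2) \<le> r ^ n / fact n"
      using r0 by (intro divide_left_mono) auto
    moreover have "G (n + 2) = (2 * r\<^sup>2) * (r ^ n / fact (n + 2))"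
      unfolding G_def by (simp add: power_add power2_eq_square)
    ultimately show "G (n + 2) \<le> (2 * r\<^sup>2) * (r ^ n / fact n)"
      using r0 mult_left_mono[of "r ^ n / fact (n + 2)" "r ^ n / fact n" "2 * r\<^sup>2"]
      by (simp only:) simp
  qed
  also have "\<dots> = (2 * r\<^sup>2) * exp r"
    using suminf_mult[OF sG0, of "2 * r\<^sup>2"] by (simp add: exp_def divide_inverse mult.commute)
  also have "\<dots> \<le> (2 * r\<^sup>2) * 3"
  proof -
    have "exp r \<le> exp 1" using r1 by (simp add: r_def)
    then have "exp r \<le> 3" using exp_le by linarith
    then show ?thesis by (intro mult_left_mono) auto
  qed
  finally have "norm R \<le> 6 * r\<^sup>2" by simp
  then have "nm R \<le> 24 * r\<^sup>2" using nm_le_norm[of R] by simp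
  then show ?thesis using e1 unfolding r_def by blast
qed

lemma deriv_lip:
  fixes f f' :: "real \<Rightarrow> real"
  assumes d: "\<And>z. min x y \<le> z \<Longrightarrow> z \<le> max x y \<Longrightarrow> DERIV f z :> f' z \<and> \<bar>f' z\<bar> \<le> L"
  shows "\<bar>f y - f x\<bar> \<le> L * \<bar>y - x\<bar>"
proof (cases x y rule: linorder_cases)
  case less
  then obtain z where z: "x < z" "z < y" "f y - f x = (y - x) * f' z"
    using MVT2[of x y f f'] d by fastforce
  have "\<bar>f' z\<bar> \<le> L" using d[of z] z less by auto
  then show ?thesis using z less by (simp add: abs_mult mult.commute mult_left_mono)
next
  case equal then show ?thesis by simp
next
  case greater
  then obtain z where z: "y < z" "z < x" "f x - f y = (x - y) * f' z"
    using MVT2[of y x f f'] d by fastforce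
  have "\<bar>f' z\<bar> \<le> L" using d[of z] z greater by auto
  then show ?thesis using z greater by (simp add: abs_mult abs_minus_commute mult.commute mult_left_mono)
qed

lemma arctan_approx:
  assumes u: "\<bar>u\<bar> \<le> 1"
  shows "\<bar>arctan u - u\<bar> \<le> u\<^sup>2"
proof -
  have "\<bar>(arctan u - u) - (arctan 0 - 0)\<bar> \<le> u\<^sup>2 * \<bar>u - 0\<bar>"
  proof (rule deriv_lip[where f'="\<lambda>t. inverse (1 + t\<^sup>2) - 1"])
    fix z assume z: "min 0 u \<le> z" "z \<le> max 0 u"
    show "DERIV (\<lambda>t. arctan t - t) z :> inverse (1 + z\<^sup>2) - 1 \<and> \<bar>inverse (1 + z\<^sup>2) - 1\<bar> \<le> u\<^sup>2"
    proof
      show "DERIV (\<lambda>t. arctan t - t) z :> inverse (1 + z\<^sup>2) - 1"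
        by (auto intro!: derivative_eq_intros)
      have "\<bar>z\<bar> \<le> \<bar>u\<bar>" using z by (cases "u \<ge> 0") auto
      then have zz: "z\<^sup>2 \<le> u\<^sup>2" by (simp add: abs_le_square_iff)
      have p: "0 < 1 + z\<^sup>2" by (simp add: add_pos_nonneg)
      have "inverse (1 + z\<^sup>2) - 1 = - (z\<^sup>2 / (1 + z\<^sup>2))"
        using p by (simp add: field_simps)
      moreover have "z\<^sup>2 / (1 + z\<^sup>2) \<le> z\<^sup>2"
        using p by (simp add: divide_le_eq) (simp add: mult_le_cancel_left1 algebra_simps)
      ultimately show "\<bar>inverse (1 + z\<^sup>2) - 1\<bar> \<le> u\<^sup>2" using zz p by simp
    qed
  qed
  then have "\<bar>arctan u - u\<bar> \<le> u\<^sup>2 * \<bar>u\<bar>" by simp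
  also have "\<dots> \<le> u\<^sup>2" using u by (simp add: mult_left_le)
  finally show ?thesis .
qed

definition psi :: "mat2 \<Rightarrow> real \<Rightarrow> real" where
  "psi B t = B$2$1 * (cos t)\<^sup>2 - B$1$2 * (sin t)\<^sup>2 + (B$2$2 - B$1$1) * (sin t * cos t)"

definition rew :: "mat2 \<Rightarrow> real \<Rightarrow> real" where
  "rew B t = B$1$1 * (cos t)\<^sup>2 + (B$1$2 + B$2$1) * (sin t * cos t) + B$2$2 * (sin t)\<^sup>2"

lemma abs_coef: "\<bar>u::real\<bar> \<le> 1 \<Longrightarrow> \<bar>a * u\<bar> \<le> \<bar>a\<bar>"
  by (simp add: abs_mult mult_left_le)

lemma trig_bounds: "\<bar>(cos (t::real))\<^sup>2\<bar> \<le> 1" "\<bar>(sin t)\<^sup>2\<bar> \<le> 1" "\<bar>sin t * cos t\<bar> \<le> 1"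
proof -
  show "\<bar>(cos t)\<^sup>2\<bar> \<le> 1" by (simp add: abs_square_le_1)
  show "\<bar>(sin t)\<^sup>2\<bar> \<le> 1" by (simp add: abs_square_le_1)
  show "\<bar>sin t * cos t\<bar> \<le> 1" by (simp add: abs_mult mult_le_one)
qed

lemma psi_bound: "\<bar>psi B t\<bar> \<le> nm B"
proof -
  have "\<bar>psi B t\<bar> \<le> \<bar>B$2$1 * (cos t)\<^sup>2\<bar> + \<bar>B$1$2 * (sin t)\<^sup>2\<bar> + \<bar>B$2$2 * (sin t * cos t)\<bar> + \<bar>B$1$1 * (sin t * cos t)\<bar>"
    unfolding psi_def by (simp add: algebra_simps)
  also have "\<dots> \<le> nm B"
    using abs_coef[OF trig_bounds(1), of "B$2$1" t] abs_coef[OF trig_bounds(2), of "B$1$2" t]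
      abs_coef[OF trig_bounds(3), of "B$2$2" t] abs_coef[OF trig_bounds(3), of "B$1$1" t]
    by (simp add: nm_2)
  finally show ?thesis .
qed

lemma rew_bound: "\<bar>rew B t\<bar> \<le> nm B"
proof -
  have "\<bar>rew B t\<bar> \<le> \<bar>B$1$1 * (cos t)\<^sup>2\<bar> + \<bar>B$1$2 * (sin t * cos t)\<bar> + \<bar>B$2$1 * (sin t * cos t)\<bar> + \<bar>B$2$2 * (sin t)\<^sup>2\<bar>"
    unfolding rew_def by (simp add: algebra_simps)
  also have "\<dots> \<le> nm B"
    using abs_coef[OF trig_bounds(1), of "B$1$1" t] abs_coef[OF trig_bounds(2), of "B$2$2" t]
      abs_coef[OF trig_bounds(3), of "B$1$2" t] abs_coef[OF trig_bounds(3), of "B$2$1" t]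
    by (simp add: nm_2)
  finally show ?thesis .
qed

lemma ring_id1: "(c::real) * (1 + (a * c\<^sup>2 + (b + d) * (s * c) + e * s\<^sup>2)) - s * (d * c\<^sup>2 - b * s\<^sup>2 + (e - a) * (s * c))
   - ((1 + a) * c + b * s) = (s\<^sup>2 + c\<^sup>2 - 1) * (a * c + b * s)"
  by (simp add: algebra_simps power2_eq_square)

lemma ring_id2: "(s::real) * (1 + (a * c\<^sup>2 + (b + d) * (s * c) + e * s\<^sup>2)) + c * (d * c\<^sup>2 - b * s\<^sup>2 + (e - a) * (s * c))
   - (d * c + (1 + e) * s) = (s\<^sup>2 + c\<^sup>2 - 1) * (d * c + e * s)"
  by (simp add: algebra_simps power2_eq_square)

lemma z_factor:
  fixes s :: real and B :: mat2
  defines "A \<equiv> s *\<^sub>R (mat 1 + B)"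
  shows "Complex ((A *v evec t) $ 1) ((A *v evec t) $ 2)
       = complex_of_real s * cis t * Complex (1 + rew B t) (psi B t)"
proof -
  have h: "(sin t)\<^sup>2 + (cos t)\<^sup>2 = 1" by simp
  have e1: "(A *v evec t) $ 1 = s * ((1 + B$1$1) * cos t + B$1$2 * sin t)"
    by (simp add: A_def matrix_vector_mult_def sum_2 evec_def mat_def algebra_simps)
  have e2: "(A *v evec t) $ 2 = s * (B$2$1 * cos t + (1 + B$2$2) * sin t)"
    by (simp add: A_def matrix_vector_mult_def sum_2 evec_def mat_def algebra_simps)
  show ?thesis
  proof (rule complex_eqI)
    have "cos t * (1 + rew B t) - sin t * psi B t - ((1 + B$1$1) * cos t + B$1$2 * sin t)
        = ((sin t)\<^sup>2 + (cos t)\<^sup>2 - 1) * (B$1$1 * cos t + B$1$2 * sin t)"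
      unfolding rew_def psi_def by (rule ring_id1)
    then have "cos t * (1 + rew B t) - sin t * psi B t = (1 + B$1$1) * cos t + B$1$2 * sin t"
      using h by simp
    then show "Re (Complex ((A *v evec t) $ 1) ((A *v evec t) $ 2)) =
        Re (complex_of_real s * cis t * Complex (1 + rew B t) (psi B t))"
      using e1 by (simp add: cis.sel) (metis right_diff_distrib mult.assoc)
  next
    have "sin t * (1 + rew B t) + cos t * psi B t - (B$2$1 * cos t + (1 + B$2$2) * sin t)
        = ((sin t)\<^sup>2 + (cos t)\<^sup>2 - 1) * (B$2$1 * cos t + B$2$2 * sin t)"
      unfolding rew_def psi_def by (rule ring_id2)
    then have "sin t * (1 + rew B t) + cos t * psi B t = B$2$1 * cos t + (1 + B$2$2) * sin t"
      using h by simp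
    then show "Im (Complex ((A *v evec t) $ 1) ((A *v evec t) $ 2)) =
        Im (complex_of_real s * cis t * Complex (1 + rew B t) (psi B t))"
      using e2 by (simp add: cis.sel algebra_simps) (metis distrib_left)
  qed
qed

lemma cis_eq_int: "cis a = cis b \<Longrightarrow> \<exists>n::int. a = b + 2 * pi * n"
proof -
  assume "cis a = cis b"
  then have "sin a = sin b \<and> cos a = cos b"
    by (metis cis.sel(1) cis.sel(2))
  then show ?thesis using sin_cos_eq_iff by blast
qed

lemma smap_geo:
  assumes s: "s = 1 \<or> s = -1" and r: "nm B \<le> 1/2"
  shows "\<exists>j::int. Smap (s *\<^sub>R (mat 1 + B)) t = t + arctan (psi B t / (1 + rew B t)) + j * pi"
proof -
  define \<zeta> where "\<zeta> = Complex (1 + rew B t) (psi B t)"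
  have re: "Re \<zeta> > 0" using rew_bound[of B t] r by (simp add: \<zeta>_def)
  then have z0: "\<zeta> \<noteq> 0" by auto
  have argz: "Arg \<zeta> = arctan (psi B t / (1 + rew B t))"
    using arg_conv_arctan[OF re] by (simp add: \<zeta>_def)
  define z where "z = complex_of_real s * cis t * \<zeta>"
  have zeq: "Smap (s *\<^sub>R (mat 1 + B)) t = Arg z"
    unfolding Smap_def z_def \<zeta>_def by (subst z_factor) (rule refl)
  have s0: "complex_of_real s \<noteq> 0" using s by auto
  have zn0: "z \<noteq> 0" using z0 s0 by (simp add: z_def)
  have sgns: "sgn (complex_of_real s) = complex_of_real s" using s by auto
  have "cis (Arg z) = sgn z" by (rule cis_Arg[OF zn0])
  also have "\<dots> = complex_of_real s * cis t * cis (Arg \<zeta>)"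
    unfolding z_def by (simp only: Real_Vector_Spaces.sgn_mult sgns cis_Arg[OF z0] sgn_cis)
  also have "\<dots> = complex_of_real s * cis (t + Arg \<zeta>)"
    by (simp add: cis_mult)
  finally have c: "cis (Arg z) = complex_of_real s * cis (t + Arg \<zeta>)" .
  show ?thesis
  proof (cases "s = 1")
    case True
    then have "cis (Arg z) = cis (t + Arg \<zeta>)" using c by simp
    then obtain n :: int where "Arg z = t + Arg \<zeta> + 2 * pi * n" using cis_eq_int by blast
    then show ?thesis using zeq argz
      by (intro exI[of _ "2 * n"]) (simp add: algebra_simps)
  next
    case False
    then have "s = -1" using s by auto
    then have "cis (Arg z) = cis (t + Arg \<zeta> + pi)" using c by (simp add: cis_mult[symmetric])
    then obtain n :: int where "Arg z = t + Arg \<zeta> + pi + 2 * pi * n" using cis_eq_int by blast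
    then show ?thesis using zeq argz
      by (intro exI[of _ "2 * n + 1"]) (simp add: algebra_simps)
  qed
qed

lemma arctan_err:
  assumes r: "nm B \<le> 1/2"
  shows "\<bar>arctan (psi B t / (1 + rew B t)) - psi B t\<bar> \<le> 6 * (nm B)\<^sup>2"
proof -
  define x where "x = rew B t"
  define y where "y = psi B t"
  define r where "r = nm B"
  have xr: "\<bar>x\<bar> \<le> r" and yr: "\<bar>y\<bar> \<le> r" using rew_bound psi_bound by (auto simp: x_def y_def r_def)
  have r2: "r \<le> 1/2" using r by (simp add: r_def)
  have den: "1 + x \<ge> 1/2" using xr r2 by linarith
  define u where "u = y / (1 + x)"
  have "\<bar>u\<bar> = \<bar>y\<bar> / (1 + x)" using den by (simp add: u_def abs_divide)
  also have "\<dots> \<le> \<bar>y\<bar> / (1/2)" using den by (intro divide_left_mono[OF den abs_ge_zero]) (simp add: mult_pos_pos)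
  finally have ub: "\<bar>u\<bar> \<le> 2 * r" using yr by (simp only: divide_divide_eq_right div_by_1)
  have "u - y = - (y * x) / (1 + x)" using den unfolding u_def by (simp add: field_simps)
  then have "\<bar>u - y\<bar> = \<bar>y\<bar> * \<bar>x\<bar> / (1 + x)" using den by (simp add: abs_mult abs_divide)
  also have "\<dots> \<le> \<bar>y\<bar> * \<bar>x\<bar> / (1/2)" using den by (intro divide_left_mono[OF den]) (simp_all add: mult_pos_pos)
  also have "\<dots> \<le> 2 * r\<^sup>2"
  proof -
    have "\<bar>y\<bar> * \<bar>x\<bar> \<le> r * r" using xr yr by (intro mult_mono) auto
    then show ?thesis by (simp add: power2_eq_square)
  qed
  finally have uy: "\<bar>u - y\<bar> \<le> 2 * r\<^sup>2" .
  have "\<bar>arctan u - u\<bar> \<le> u\<^sup>2" using ub r2 by (intro arctan_approx) auto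
  also have "\<dots> \<le> (2 * r)\<^sup>2"
    using power_mono[OF ub, of 2] by simp
  finally have "\<bar>arctan u - u\<bar> \<le> 4 * r\<^sup>2" by (simp add: power_mult_distrib)
  then have "\<bar>arctan u - y\<bar> \<le> 6 * r\<^sup>2" using uy by linarith
  then show ?thesis unfolding u_def x_def y_def r_def .
qed

lemma per_nat: "(\<And>u. g (u + pi) = g u) \<Longrightarrow> g (u + real n * pi) = (g u :: 'b)"
proof (induction n arbitrary: u)
  case 0 then show ?case by simp
next
  case (Suc n)
  have "g (u + real (Suc n) * pi) = g ((u + real n * pi) + pi)" by (simp add: algebra_simps)
  also have "\<dots> = g (u + real n * pi)" by (rule Suc.prems)
  also have "\<dots> = g u" by (rule Suc.IH[OF Suc.prems])
  finally show ?case .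
qed

lemma per_int: "(\<And>u. g (u + pi) = g u) \<Longrightarrow> g (u + real_of_int j * pi) = (g u :: 'b)"
proof (cases "j \<ge> 0")
  case True
  assume p: "\<And>u. g (u + pi) = g u"
  then show ?thesis using per_nat[of g u "nat j", OF p] True by simp
next
  case False
  assume p: "\<And>u. g (u + pi) = g u"
  have "g u = g ((u + real_of_int j * pi) + real (nat (-j)) * pi)"
    using False by (simp add: algebra_simps)
  also have "\<dots> = g (u + real_of_int j * pi)" by (rule per_nat[where g=g, OF p])
  finally show ?thesis by simp
qed

lemma psi_add: "psi (A + B) t = psi A t + psi B t"
  by (simp add: psi_def algebra_simps)

lemma smap_expand:
  assumes s: "s = 1 \<or> s = -1" and x: "nm X \<le> 1/50"
  shows "\<exists>j::int. \<exists>\<delta>. Smap (s *\<^sub>R mexp X) t = t + \<delta> + j * pi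
     \<and> \<bar>\<delta> - psi X t\<bar> \<le> 40 * (nm X)\<^sup>2 \<and> \<bar>\<delta>\<bar> \<le> 2 * nm X"
proof -
  define x where "x = nm X"
  have x0: "0 \<le> x" by (simp add: x_def nm_nonneg)
  have x1: "x \<le> 1/50" using x by (simp add: x_def)
  obtain R where R: "mexp X = mat 1 + X + R" "nm R \<le> 24 * x\<^sup>2"
    using mexp_expand[of X] x unfolding x_def by auto
  have xx: "x\<^sup>2 \<le> x / 50" proof -
    have "x * x \<le> x * (1/50)" using x1 x0 by (rule mult_left_mono)
    then show ?thesis by (simp add: power2_eq_square)
  qed
  define B where "B = X + R"
  have mB: "mexp X = mat 1 + B" using R by (simp add: B_def add.assoc)
  have nB: "nm B \<le> x + 24 * x\<^sup>2" using nm_add[of X R] R(2) by (simp add: B_def x_def)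
  then have nB2: "nm B \<le> 3/2 * x" using xx x0 by linarith
  then have nBh: "nm B \<le> 1/2" using x1 by linarith
  obtain j :: int where j: "Smap (s *\<^sub>R mexp X) t = t + arctan (psi B t / (1 + rew B t)) + j * pi"
    using smap_geo[OF s nBh, of t] mB by auto
  define \<delta> where "\<delta> = arctan (psi B t / (1 + rew B t))"
  have e1: "\<bar>\<delta> - psi B t\<bar> \<le> 6 * (nm B)\<^sup>2" unfolding \<delta>_def by (rule arctan_err[OF nBh])
  have "(nm B)\<^sup>2 \<le> (3/2 * x)\<^sup>2" using nB2 nm_nonneg[of B] by (intro power_mono) auto
  moreover have "(3/2 * x)\<^sup>2 = 9/4 * x\<^sup>2" by (simp add: power2_eq_square)
  ultimately have e2: "\<bar>\<delta> - psi B t\<bar> \<le> 14 * x\<^sup>2" using e1 x0 zero_le_power2[of x] by linarith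
  have pR: "\<bar>psi R t\<bar> \<le> 24 * x\<^sup>2" using psi_bound[of R t] R(2) by linarith
  have e3: "\<bar>\<delta> - psi X t\<bar> \<le> 40 * x\<^sup>2"
    using e2 pR psi_add[of X R t] unfolding B_def by linarith
  have "\<bar>psi X t\<bar> \<le> x" using psi_bound[of X t] by (simp add: x_def)
  then have e4: "\<bar>\<delta>\<bar> \<le> 2 * x" using e3 xx by linarith
  show ?thesis using j e3 e4 unfolding \<delta>_def x_def by blast
qed

lemma taylor_g:
  fixes g gd :: "real \<Rightarrow> real"
  assumes gder: "\<And>u. (g has_real_derivative gd u) (at u)"
    and glip: "\<And>a b. \<bar>gd a - gd b\<bar> \<le> Lg * \<bar>a - b\<bar>"
  shows "\<bar>g (t + \<delta>) - g t - gd t * \<delta>\<bar> \<le> Lg * \<delta>\<^sup>2"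
proof -
  have "\<bar>(g (t + \<delta>) - gd t * (t + \<delta>)) - (g t - gd t * t)\<bar> \<le> (Lg * \<bar>\<delta>\<bar>) * \<bar>(t + \<delta>) - t\<bar>"
  proof (rule deriv_lip[where f = "\<lambda>u. g u - gd t * u" and f' = "\<lambda>u. gd u - gd t"])
    fix z assume z: "min t (t + \<delta>) \<le> z" "z \<le> max t (t + \<delta>)"
    show "DERIV (\<lambda>u. g u - gd t * u) z :> gd z - gd t \<and> \<bar>gd z - gd t\<bar> \<le> Lg * \<bar>\<delta>\<bar>"
    proof
      show "DERIV (\<lambda>u. g u - gd t * u) z :> gd z - gd t"
        using gder[of z] by (auto intro!: derivative_eq_intros)
      have "\<bar>z - t\<bar> \<le> \<bar>\<delta>\<bar>" using z by (cases "\<delta> \<ge> 0") auto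
      moreover have "Lg \<ge> 0" using glip[of 1 0] by simp
      ultimately show "\<bar>gd z - gd t\<bar> \<le> Lg * \<bar>\<delta>\<bar>"
        using glip[of z t] by (meson mult_left_mono order_trans)
    qed
  qed
  moreover have "g (t + \<delta>) - gd t * (t + \<delta>) - (g t - gd t * t) = g (t + \<delta>) - g t - gd t * \<delta>"
    by (simp add: algebra_simps)
  moreover have "Lg * \<bar>\<delta>\<bar> * \<bar>(t + \<delta>) - t\<bar> = Lg * \<delta>\<^sup>2"
    by (simp only: add_diff_cancel_left' mult.assoc abs_mult_self_eq power2_eq_square)
  ultimately show ?thesis by (simp only:)
qed

lemma seq_space: "prob_space p \<Longrightarrow> sequence_space p"
  by (simp add: sequence_space_def product_prob_space_def product_prob_space_axioms_def
      product_sigma_finite_def prob_space_imp_sigma_finite)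

primrec ts :: "('s \<Rightarrow> real \<Rightarrow> real) \<Rightarrow> real \<Rightarrow> (nat \<Rightarrow> 's) \<Rightarrow> nat \<Rightarrow> real" where
  "ts S x \<nu> 0 = x"
| "ts S x \<nu> (Suc n) = S (\<nu> n) (ts S x \<nu> n)"

lemma theta_ts: "theta_seq S x \<omega> n = ts S x (\<lambda>i. \<omega> (Suc i)) n"
  by (induction n) auto

lemma ts_first: "ts S x \<nu> (Suc n) = ts S (S (\<nu> 0) x) (\<lambda>i. \<nu> (Suc i)) n"
  by (induction n) auto

lemma ts_meas:
  assumes "(\<lambda>(s, x). S s x) \<in> borel_measurable (p \<Otimes>\<^sub>M borel)"
  shows "(\<lambda>(x, \<nu>). ts S x \<nu> n) \<in> borel_measurable (borel \<Otimes>\<^sub>M PiM UNIV (\<lambda>_. p))"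
proof (induction n)
  case 0 then show ?case by simp
next
  case (Suc n)
  have m2: "(\<lambda>(x, \<nu>). (\<nu> n, ts S x \<nu> n)) \<in> measurable (borel \<Otimes>\<^sub>M PiM UNIV (\<lambda>_. p)) (p \<Otimes>\<^sub>M borel)"
    using Suc by measurable
  have "(\<lambda>(x, \<nu>). ts S x \<nu> (Suc n)) = (\<lambda>(s, x). S s x) o (\<lambda>(x, \<nu>). (\<nu> n, ts S x \<nu> n))"
    by (auto simp: fun_eq_iff)
  then show ?case using measurable_comp[OF m2 assms] by metis
qed

lemma prob_int_bound:
  fixes F :: "'a \<Rightarrow> real"
  assumes "prob_space p" "F \<in> borel_measurable p" "\<And>x. x \<in> space p \<Longrightarrow> \<bar>F x\<bar> \<le> c"
  shows "\<bar>integral\<^sup>L p F\<bar> \<le> c" "integrable p F"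
proof -
  interpret prob_space p by fact
  show int: "integrable p F"
    using assms by (intro integrable_const_bound[where B=c]) auto
  have "\<bar>integral\<^sup>L p F\<bar> \<le> integral\<^sup>L p (\<lambda>x. \<bar>F x\<bar>)"
    by (rule integral_abs_bound)
  also have "\<dots> \<le> integral\<^sup>L p (\<lambda>x. c)"
    using assms int by (intro integral_mono) auto
  also have "\<dots> = c" by (simp add: prob_space)
  finally show "\<bar>integral\<^sup>L p F\<bar> \<le> c" .
qed

definition Qop :: "'s measure \<Rightarrow> ('s \<Rightarrow> real \<Rightarrow> real) \<Rightarrow> (real \<Rightarrow> real) \<Rightarrow> real \<Rightarrow> real" where
  "Qop p S h \<theta> = (\<integral>\<sigma>. h (S \<sigma> \<theta>) \<partial>p)"

lemma Qop_meas:
  assumes p: "prob_space p" and Sm: "(\<lambda>(s, x). S s x) \<in> borel_measurable (p \<Otimes>\<^sub>M borel)"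
    and h: "h \<in> borel_measurable borel"
  shows "Qop p S h \<in> borel_measurable borel"
proof -
  interpret prob_space p by fact
  have "(\<lambda>(x, s). S s x) \<in> borel_measurable (borel \<Otimes>\<^sub>M p)"
    using Sm measurable_pair_swap_iff[of "\<lambda>(s, x). S s x" p borel borel] by simp
  then have "(\<lambda>(x, s). h (S s x)) \<in> borel_measurable (borel \<Otimes>\<^sub>M p)"
    using h by measurable
  then show ?thesis unfolding Qop_def
    by (rule borel_measurable_lebesgue_integral) 
qed

lemma Qop_bound:
  assumes p: "prob_space p" and Sm: "(\<lambda>(s, x). S s x) \<in> borel_measurable (p \<Otimes>\<^sub>M borel)"
    and h: "h \<in> borel_measurable borel" and hb: "\<And>x. \<bar>h x\<bar> \<le> c"
  shows "\<bar>Qop p S h x\<bar> \<le> c" "integrable p (\<lambda>\<sigma>. h (S \<sigma> x))"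
proof -
  have "(\<lambda>\<sigma>. S \<sigma> x) \<in> borel_measurable p"
    using measurable_comp[OF measurable_Pair2'[of x borel p] Sm] by (simp add: comp_def)
  then have m: "(\<lambda>\<sigma>. h (S \<sigma> x)) \<in> borel_measurable p" using h by measurable
  show "\<bar>Qop p S h x\<bar> \<le> c" "integrable p (\<lambda>\<sigma>. h (S \<sigma> x))"
    unfolding Qop_def using prob_int_bound[OF p m] hb by auto
qed

lemma Qpow:
  assumes p: "prob_space p" and Sm: "(\<lambda>(s, x). S s x) \<in> borel_measurable (p \<Otimes>\<^sub>M borel)"
    and h: "h \<in> borel_measurable borel" and hb: "\<And>x. \<bar>h x\<bar> \<le> c"
  shows "(Qop p S ^^ n) h \<in> borel_measurable borel \<and> (\<forall>x. \<bar>(Qop p S ^^ n) h x\<bar> \<le> c)"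
proof (induction n)
  case 0 then show ?case using h hb by simp
next
  case (Suc n)
  then show ?case using Qop_meas[OF p Sm] Qop_bound[OF p Sm] by simp
qed

lemma markov:
  assumes p: "prob_space p" and Sm: "(\<lambda>(s, x). S s x) \<in> borel_measurable (p \<Otimes>\<^sub>M borel)"
    and h: "h \<in> borel_measurable borel" and hb: "\<And>x. \<bar>h x\<bar> \<le> c"
  shows "(\<integral>\<nu>. h (ts S x \<nu> n) \<partial>PiM UNIV (\<lambda>_. p)) = (Qop p S ^^ n) h x"
proof (induction n arbitrary: x)
  interpret SS: sequence_space p using seq_space[OF p] .
  case 0 then show ?case by (simp add: SS.P.prob_space)
next
  interpret SS: sequence_space p using seq_space[OF p] .
  interpret PS: pair_prob_space p SS.S
    unfolding pair_prob_space_def pair_sigma_finite_def using p SS.P.prob_space_axioms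
    by (auto intro: prob_space_imp_sigma_finite)
  case (Suc n)
  have Sx: "(\<lambda>\<sigma>. S \<sigma> x) \<in> borel_measurable p"
    using measurable_comp[OF measurable_Pair2'[of x borel p] Sm] by (simp add: comp_def)
  have tsm: "(\<lambda>(x, \<nu>). ts S x \<nu> n) \<in> borel_measurable (borel \<Otimes>\<^sub>M PiM UNIV (\<lambda>_. p))"
    by (rule ts_meas[OF Sm])
  have pm: "(\<lambda>(s, \<nu>). (S s x, \<nu>)) \<in> measurable (p \<Otimes>\<^sub>M PiM UNIV (\<lambda>_. p)) (borel \<Otimes>\<^sub>M PiM UNIV (\<lambda>_. p))"
    using Sx by measurable
  have G: "(\<lambda>(s, \<nu>). h (ts S (S s x) \<nu> n)) \<in> borel_measurable (p \<Otimes>\<^sub>M PiM UNIV (\<lambda>_. p))"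
  proof -
    have "(\<lambda>(s, \<nu>). ts S (S s x) \<nu> n) = (\<lambda>(x, \<nu>). ts S x \<nu> n) o (\<lambda>(s, \<nu>). (S s x, \<nu>))"
      by (auto simp: fun_eq_iff)
    then have "(\<lambda>(s, \<nu>). ts S (S s x) \<nu> n) \<in> borel_measurable (p \<Otimes>\<^sub>M PiM UNIV (\<lambda>_. p))"
      using measurable_comp[OF pm tsm] by metis
    then show ?thesis using h by measurable
  qed
  have Gint: "integrable (p \<Otimes>\<^sub>M PiM UNIV (\<lambda>_. p)) (\<lambda>(s, \<nu>). h (ts S (S s x) \<nu> n))"
    using prob_int_bound(2)[OF PS.P.prob_space_axioms G, of c] hb by (simp add: split_beta)
  have F: "(\<lambda>\<nu>. h (ts S x \<nu> (Suc n))) \<in> borel_measurable (PiM UNIV (\<lambda>_. p))"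
  proof -
    have "(\<lambda>\<nu>. (x, \<nu>)) \<in> measurable (PiM UNIV (\<lambda>_. p)) (borel \<Otimes>\<^sub>M PiM UNIV (\<lambda>_. p))"
      by simp
    from measurable_comp[OF this ts_meas[OF Sm, of "Suc n"]]
    show ?thesis using h by (simp add: comp_def)
  qed
  have "(\<integral>\<nu>. h (ts S x \<nu> (Suc n)) \<partial>PiM UNIV (\<lambda>_. p))
      = (\<integral>\<nu>. h (ts S x \<nu> (Suc n)) \<partial>distr (p \<Otimes>\<^sub>M SS.S) SS.S (\<lambda>(s, \<omega>). case_nat s \<omega>))"
    by (simp add: SS.PiM_iter)
  also have "\<dots> = (\<integral>z. h (ts S x ((\<lambda>(s, \<omega>). case_nat s \<omega>) z) (Suc n)) \<partial>(p \<Otimes>\<^sub>M SS.S))"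
    by (rule integral_distr) (use F in simp_all)
  also have "\<dots> = (\<integral>z. (\<lambda>(s, \<nu>). h (ts S (S s x) \<nu> n)) z \<partial>(p \<Otimes>\<^sub>M SS.S))"
    by (intro Bochner_Integration.integral_cong refl) (auto simp del: ts.simps(2) simp add: ts_first)
  also have "\<dots> = (\<integral>s. (\<integral>\<nu>. h (ts S (S s x) \<nu> n) \<partial>SS.S) \<partial>p)"
    using PS.integral_fst'[OF Gint] by simp
  also have "\<dots> = (\<integral>s. (Qop p S ^^ n) h (S s x) \<partial>p)"
    using Suc by simp
  also have "\<dots> = (Qop p S ^^ Suc n) h x"
    by (simp add: Qop_def)
  finally show ?case .
qed

lemma shift_meas: "(\<lambda>\<omega>. \<lambda>i. \<omega> (Suc i)) \<in> measurable (PiM UNIV (\<lambda>_::nat. p)) (PiM UNIV (\<lambda>_::nat. p))"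
  by (rule measurable_PiM_single'[where f="\<lambda>i \<omega>. \<omega> (Suc i)"]) (auto simp: space_PiM)

lemma shift_int:
  fixes F :: "(nat \<Rightarrow> 's) \<Rightarrow> real"
  assumes p: "prob_space p" and F: "F \<in> borel_measurable (PiM UNIV (\<lambda>_. p))" and Fb: "\<And>\<omega>. \<bar>F \<omega>\<bar> \<le> c"
  shows "(\<integral>\<omega>. F (\<lambda>i. \<omega> (Suc i)) \<partial>PiM UNIV (\<lambda>_. p)) = (\<integral>\<omega>. F \<omega> \<partial>PiM UNIV (\<lambda>_. p))"
proof -
  interpret SS: sequence_space p using seq_space[OF p] .
  interpret PS: pair_prob_space p SS.S
    unfolding pair_prob_space_def pair_sigma_finite_def using p SS.P.prob_space_axioms
    by (auto intro: prob_space_imp_sigma_finite)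
  have F2: "(\<lambda>\<omega>. F (\<lambda>i. \<omega> (Suc i))) \<in> borel_measurable SS.S"
    using measurable_comp[OF shift_meas F] by (simp add: comp_def)
  have G: "(\<lambda>(s, \<nu>). F \<nu>) \<in> borel_measurable (p \<Otimes>\<^sub>M SS.S)"
    using F by measurable
  have Gint: "integrable (p \<Otimes>\<^sub>M SS.S) (\<lambda>(s, \<nu>). F \<nu>)"
    using prob_int_bound(2)[OF PS.P.prob_space_axioms G, of c] Fb by (simp add: split_beta)
  have "(\<integral>\<omega>. F (\<lambda>i. \<omega> (Suc i)) \<partial>SS.S)
      = (\<integral>\<omega>. F (\<lambda>i. \<omega> (Suc i)) \<partial>distr (p \<Otimes>\<^sub>M SS.S) SS.S (\<lambda>(s, \<omega>). case_nat s \<omega>))"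
    by (simp add: SS.PiM_iter)
  also have "\<dots> = (\<integral>z. F (\<lambda>i. ((\<lambda>(s, \<omega>). case_nat s \<omega>) z) (Suc i)) \<partial>(p \<Otimes>\<^sub>M SS.S))"
    by (rule integral_distr) (use F2 in simp_all)
  also have "\<dots> = (\<integral>z. (\<lambda>(s, \<nu>). F \<nu>) z \<partial>(p \<Otimes>\<^sub>M SS.S))"
    by (intro Bochner_Integration.integral_cong refl) auto
  also have "\<dots> = (\<integral>s. (\<integral>\<nu>. F \<nu> \<partial>SS.S) \<partial>p)"
    using PS.integral_fst'[OF Gint] by simp
  also have "\<dots> = (\<integral>\<nu>. F \<nu> \<partial>SS.S)"
    by (simp add: prob_space.prob_space[OF p])
  finally show ?thesis .
qed

lemma ts_meas1:
  assumes Sm: "(\<lambda>(s, x). S s x) \<in> borel_measurable (p \<Otimes>\<^sub>M borel)"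
  shows "(\<lambda>\<nu>. ts S x \<nu> n) \<in> borel_measurable (PiM UNIV (\<lambda>_. p))"
proof -
  have "(\<lambda>\<nu>. (x, \<nu>)) \<in> measurable (PiM UNIV (\<lambda>_. p)) (borel \<Otimes>\<^sub>M PiM UNIV (\<lambda>_. p))"
    by simp
  from measurable_comp[OF this ts_meas[OF Sm, of n]]
  show ?thesis by (simp add: comp_def)
qed

lemma Phi_eq:
  assumes p: "prob_space p" and Sm: "(\<lambda>(s, x). S s x) \<in> borel_measurable (p \<Otimes>\<^sub>M borel)"
    and h: "h \<in> borel_measurable borel" and hb: "\<And>x. \<bar>h x\<bar> \<le> c"
  shows "(\<integral>\<omega>. h (theta_seq S x \<omega> n) \<partial>PiM UNIV (\<lambda>_. p)) = (Qop p S ^^ n) h x"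
proof -
  have F: "(\<lambda>\<nu>. h (ts S x \<nu> n)) \<in> borel_measurable (PiM UNIV (\<lambda>_. p))"
    using ts_meas1[OF Sm] h by measurable
  have "(\<integral>\<omega>. h (theta_seq S x \<omega> n) \<partial>PiM UNIV (\<lambda>_. p))
     = (\<integral>\<omega>. h (ts S x (\<lambda>i. \<omega> (Suc i)) n) \<partial>PiM UNIV (\<lambda>_. p))"
    by (simp add: theta_ts)
  also have "\<dots> = (\<integral>\<omega>. h (ts S x \<omega> n) \<partial>PiM UNIV (\<lambda>_. p))"
    using shift_int[OF p F, of c] hb by simp
  also have "\<dots> = (Qop p S ^^ n) h x"
    by (rule markov[OF p Sm h hb])
  finally show ?thesis .
qed

lemma theta_meas:
  assumes Sm: "(\<lambda>(s, x). S s x) \<in> borel_measurable (p \<Otimes>\<^sub>M borel)"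
  shows "(\<lambda>\<omega>. theta_seq S x \<omega> n) \<in> borel_measurable (PiM UNIV (\<lambda>_. p))"
proof -
  have "(\<lambda>\<omega>. ts S x (\<lambda>i. \<omega> (Suc i)) n) \<in> borel_measurable (PiM UNIV (\<lambda>_. p))"
    using measurable_comp[OF shift_meas ts_meas1[OF Sm]] by (simp add: comp_def)
  then show ?thesis by (simp add: theta_ts)
qed

lemma telescope:
  fixes f g :: "real \<Rightarrow> real"
  assumes p: "prob_space p" and Sm: "(\<lambda>(s, x). S s x) \<in> borel_measurable (p \<Otimes>\<^sub>M borel)"
    and f: "f \<in> borel_measurable borel" and fb: "\<And>x. \<bar>f x\<bar> \<le> cf"
    and g: "g \<in> borel_measurable borel" and gb: "\<And>x. \<bar>g x\<bar> \<le> cg"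
    and a: "a > 0" and e: "\<And>x. \<bar>Qop p S g x - g x - a * (f x - m)\<bar> \<le> e"
    and N: "N \<ge> 1"
  shows "\<bar>I_N p S x f N - m\<bar> \<le> 2 * cg / (a * N) + e / a"
proof -
  let ?P = "PiM UNIV (\<lambda>_::nat. p)"
  define Phi :: "nat \<Rightarrow> (real \<Rightarrow> real) \<Rightarrow> real" where "Phi n h = (\<integral>\<omega>. h (theta_seq S x \<omega> n) \<partial>?P)" for n h
  define E where "E y = Qop p S g y - g y - a * (f y - m)" for y
  have Qg: "Qop p S g \<in> borel_measurable borel" by (rule Qop_meas[OF p Sm g])
  have Em: "E \<in> borel_measurable borel" unfolding E_def using Qg f g by measurable
  have Eb: "\<And>y. \<bar>E y\<bar> \<le> e" using e unfolding E_def by auto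
  have Qgb: "\<And>y. \<bar>Qop p S g y\<bar> \<le> cg" using Qop_bound[OF p Sm g gb] by auto
  have PP: "prob_space ?P"
    using p by (intro prob_space_PiM) auto
  have intg: "integrable ?P (\<lambda>\<omega>. h (theta_seq S x \<omega> n))"
    if "h \<in> borel_measurable borel" "\<And>y. \<bar>h y\<bar> \<le> c" for h :: "real \<Rightarrow> real" and c :: real and n
  proof -
    have "(\<lambda>\<omega>. h (theta_seq S x \<omega> n)) \<in> borel_measurable ?P"
      using theta_meas[OF Sm] that(1) by measurable
    then show ?thesis using prob_int_bound(2)[OF PP, where c=c] that(2) by blast
  qed
  have Phi_b: "\<bar>Phi n h\<bar> \<le> c"
    if "h \<in> borel_measurable borel" "\<And>y. \<bar>h y\<bar> \<le> c" for h :: "real \<Rightarrow> real" and c :: real and n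
  proof -
    have "(\<lambda>\<omega>. h (theta_seq S x \<omega> n)) \<in> borel_measurable ?P"
      using theta_meas[OF Sm] that(1) by measurable
    then show ?thesis unfolding Phi_def using prob_int_bound(1)[OF PP, where c=c] that(2) by blast
  qed
  have step: "Phi (Suc n) g - Phi n g = a * (Phi n f - m) + Phi n E" for n
  proof -
    have "Phi (Suc n) g = (Qop p S ^^ Suc n) g x"
      unfolding Phi_def by (rule Phi_eq[OF p Sm g gb])
    also have "\<dots> = (Qop p S ^^ n) (Qop p S g) x"
      by (simp add: funpow_Suc_right del: funpow.simps)
    also have "\<dots> = Phi n (Qop p S g)"
      unfolding Phi_def by (rule Phi_eq[OF p Sm Qg Qgb, symmetric])
    also have "\<dots> = Phi n (\<lambda>y. g y + a * f y - a * m + E y)"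
      unfolding E_def by (simp add: algebra_simps)
    also have "\<dots> = Phi n g + a * Phi n f - a * m + Phi n E"
    proof -
      note i1 = intg[OF g gb, of n] and i2 = intg[OF f fb, of n] and i3 = intg[OF Em Eb, of n]
      have i2': "integrable ?P (\<lambda>\<omega>. a * f (theta_seq S x \<omega> n))"
        using i2 by (rule integrable_mult_right)
      have i4: "integrable ?P (\<lambda>\<omega>. a * m)"
        using PP by (intro finite_measure.integrable_const) (simp add: prob_space_def)
      have i5: "integrable ?P (\<lambda>\<omega>. g (theta_seq S x \<omega> n) + a * f (theta_seq S x \<omega> n))"
        using i1 i2' by (rule Bochner_Integration.integrable_add)
      have i6: "integrable ?P (\<lambda>\<omega>. g (theta_seq S x \<omega> n) + a * f (theta_seq S x \<omega> n) - a * m)"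
        using i5 i4 by (rule Bochner_Integration.integrable_diff)
      show ?thesis unfolding Phi_def
        apply (subst Bochner_Integration.integral_add[OF i6 i3])
        apply (subst Bochner_Integration.integral_diff[OF i5 i4])
        apply (subst Bochner_Integration.integral_add[OF i1 i2'])
        apply (simp add: prob_space.prob_space[OF PP])
        done
    qed
    finally show ?thesis by (simp add: algebra_simps)
  qed
  have sum_eq: "a * (\<Sum>n<N. (Phi n f - m)) = Phi N g - Phi 0 g - (\<Sum>n<N. Phi n E)"
  proof -
    have "a * (\<Sum>n<N. (Phi n f - m)) = (\<Sum>n<N. (Phi (Suc n) g - Phi n g) - Phi n E)"
      by (simp add: step sum_distrib_left)
    also have "\<dots> = Phi N g - Phi 0 g - (\<Sum>n<N. Phi n E)"
      by (subst sum_subtractf, subst sum_lessThan_telescope) (rule refl)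
    finally show ?thesis .
  qed
  have "\<bar>\<Sum>n<N. Phi n E\<bar> \<le> (\<Sum>n<N. e)"
    using Phi_b[OF Em Eb] by (intro order.trans[OF sum_abs] sum_mono) auto
  then have "\<bar>a * (\<Sum>n<N. (Phi n f - m))\<bar> \<le> 2 * cg + N * e"
    unfolding sum_eq using Phi_b[OF g gb, of N] Phi_b[OF g gb, of 0] by simp
  moreover have "I_N p S x f N - m = (\<Sum>n<N. (Phi n f - m)) / N"
    using N unfolding I_N_def Phi_def by (simp add: sum_subtractf field_simps)
  ultimately show ?thesis
  proof -
    assume H1: "\<bar>a * (\<Sum>n<N. (Phi n f - m))\<bar> \<le> 2 * cg + N * e"
      and H2: "I_N p S x f N - m = (\<Sum>n<N. (Phi n f - m)) / N"
    define \<Sigma> where "\<Sigma> = (\<Sum>n<N. (Phi n f - m))"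
    have Np: "real N > 0" using N by simp
    have "\<bar>\<Sigma>\<bar> \<le> (2 * cg + N * e) / a"
      using H1 a unfolding \<Sigma>_def by (simp add: abs_mult pos_le_divide_eq mult.commute)
    then have "\<bar>\<Sigma>\<bar> / N \<le> (2 * cg + N * e) / a / N"
      using Np by (intro divide_right_mono) auto
    also have "\<dots> = 2 * cg / (a * N) + e / a"
      using Np a by (simp add: field_simps)
    finally show ?thesis using H2 unfolding \<Sigma>_def by simp
  qed
qed

lemma per_bounded:
  fixes \<phi> :: "real \<Rightarrow> real"
  assumes c: "continuous_on UNIV \<phi>" and p: "\<And>u. \<phi> (u + pi) = \<phi> u"
  shows "\<exists>C. \<forall>u. \<bar>\<phi> u\<bar> \<le> C"
proof -
  have "compact (\<phi> ` {0..pi})"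
    by (rule compact_continuous_image) (auto intro: continuous_on_subset[OF c])
  then obtain C where C: "\<And>y. y \<in> \<phi> ` {0..pi} \<Longrightarrow> norm y \<le> C"
    using compact_imp_bounded bounded_iff by metis
  have "\<bar>\<phi> u\<bar> \<le> C" for u
  proof -
    define j where "j = \<lfloor>u / pi\<rfloor>"
    have j1: "real_of_int j \<le> u / pi" and j2: "u / pi < real_of_int j + 1"
      unfolding j_def by linarith+
    have "real_of_int j * pi \<le> u" using j1 pi_gt_zero by (simp add: pos_le_divide_eq)
    moreover have "u < (real_of_int j + 1) * pi" using j2 pi_gt_zero by (simp add: pos_divide_less_eq)
    ultimately have "u - real_of_int j * pi \<in> {0..pi}" by (simp add: algebra_simps)
    moreover have "\<phi> u = \<phi> ((u - real_of_int j * pi) + real_of_int j * pi)" by simp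
    then have "\<phi> u = \<phi> (u - real_of_int j * pi)" using per_int[where g=\<phi>, OF p] by metis
    ultimately show ?thesis using C by auto
  qed
  then show ?thesis by blast
qed

lemma f_props:
  fixes f :: "real \<Rightarrow> real" and \<mu> :: real
  assumes fC1: "f C1_differentiable_on UNIV" and fper: "\<And>u. f (u + pi) = f u" and mu: "\<mu> \<noteq> 0"
  defines "m \<equiv> integral {0..pi} (\<lambda>\<theta>. f \<theta> / pi)"
  defines "gd \<equiv> (\<lambda>\<theta>. (f \<theta> - m) / \<mu>)"
  shows "\<exists>g Lg Gd Cg Cf. (\<forall>u. (g has_real_derivative gd u) (at u)) \<and> (\<forall>u. g (u + pi) = g u)
     \<and> (\<forall>a b. \<bar>gd a - gd b\<bar> \<le> Lg * \<bar>a - b\<bar>) \<and> (\<forall>u. \<bar>gd u\<bar> \<le> Gd) \<and> (\<forall>u. \<bar>g u\<bar> \<le> Cg)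
     \<and> (\<forall>u. \<bar>f u\<bar> \<le> Cf) \<and> continuous_on UNIV g \<and> continuous_on UNIV f"
proof -
  define f' where "f' x = vector_derivative f (at x)" for x
  have fdiff: "\<And>x. f differentiable at x" and f'c: "continuous_on UNIV f'"
    using fC1 unfolding C1_differentiable_on_eq f'_def by auto
  have fder: "(f has_real_derivative f' x) (at x)" for x
    using vector_derivative_works[THEN iffD1, OF fdiff[of x]]
    by (simp add: f'_def has_real_derivative_iff_has_vector_derivative)
  have fc: "continuous_on UNIV f"
    using fder by (intro continuous_at_imp_continuous_on) (auto intro: DERIV_isCont)
  have f'per: "f' (u + pi) = f' u" for u
  proof -
    have "((\<lambda>x. f (x + pi)) has_real_derivative f' (u + pi) * 1) (at u)"
      by (rule DERIV_chain2[OF fder]) (auto intro!: derivative_eq_intros)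
    then have "(f has_real_derivative f' (u + pi)) (at u)" using fper by simp
    then show ?thesis using fder[of u] by (rule DERIV_unique)
  qed
  obtain Lf where Lf: "\<And>u. \<bar>f' u\<bar> \<le> Lf" using per_bounded[OF f'c f'per] by blast
  have flip: "\<bar>f a - f b\<bar> \<le> Lf * \<bar>a - b\<bar>" for a b
    using deriv_lip[of b a f f' Lf] fder Lf by auto
  obtain Cf where Cf: "\<And>u. \<bar>f u\<bar> \<le> Cf" using per_bounded[OF fc fper] by blast
  have gdc: "continuous_on UNIV gd" unfolding gd_def using mu by (intro continuous_intros fc) auto
  have gdper: "gd (u + pi) = gd u" for u by (simp add: gd_def fper)
  obtain Gd where Gd: "\<And>u. \<bar>gd u\<bar> \<le> Gd" using per_bounded[OF gdc gdper] by blast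
  have gdlip: "\<bar>gd a - gd b\<bar> \<le> (Lf / \<bar>\<mu>\<bar>) * \<bar>a - b\<bar>" for a b
  proof -
    have "\<bar>gd a - gd b\<bar> = \<bar>f a - f b\<bar> / \<bar>\<mu>\<bar>" by (simp add: gd_def diff_divide_distrib[symmetric])
    also have "\<dots> \<le> Lf * \<bar>a - b\<bar> / \<bar>\<mu>\<bar>" using flip[of a b] by (intro divide_right_mono) auto
    finally show ?thesis by simp
  qed
  obtain G where G: "\<And>x::real. (G has_vector_derivative gd x) (at x)"
    using einterval_antiderivative[of "-\<infinity>" "\<infinity>" gd] gdc
    by (auto simp: continuous_on_eq_continuous_at)
  have Gder: "(G has_real_derivative gd x) (at x)" for x
    using G[of x] by (simp add: has_real_derivative_iff_has_vector_derivative)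
  have Gc: "continuous_on UNIV G"
    using Gder by (intro continuous_at_imp_continuous_on) (auto intro: DERIV_isCont)
  have int0: "(gd has_integral (G pi - G 0)) {0..pi}"
    by (rule fundamental_theorem_of_calculus) (auto intro: has_vector_derivative_at_within G)
  have fint: "(f has_integral integral {0..pi} f) {0..pi}"
    by (rule integrable_integral) (auto intro: integrable_continuous_real continuous_on_subset[OF fc])
  have "((\<lambda>\<theta>. f \<theta> / pi) has_integral integral {0..pi} f / pi) {0..pi}"
    using has_integral_divide[OF fint] by simp
  then have m_eq: "m = integral {0..pi} f / pi" unfolding m_def by (rule integral_unique)
  have "((\<lambda>\<theta>. f \<theta> - m) has_integral (integral {0..pi} f - m * pi)) {0..pi}"
    using has_integral_diff[OF fint has_integral_const_real[of m 0 pi]] by (simp add: mult.commute)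
  then have "(gd has_integral (integral {0..pi} f - m * pi) / \<mu>) {0..pi}"
    unfolding gd_def by (rule has_integral_divide)
  moreover have "(integral {0..pi} f - m * pi) / \<mu> = 0" by (simp add: m_eq)
  ultimately have "G pi - G 0 = 0" using int0 has_integral_unique by metis
  have Gper: "G (u + pi) = G u" for u
  proof -
    have "\<forall>x. DERIV (\<lambda>v. G (v + pi) - G v) x :> 0"
    proof
      fix x
      have d1: "DERIV (\<lambda>v. G (v + pi)) x :> gd (x + pi) * 1"
        by (rule DERIV_chain2[OF Gder]) (auto intro!: derivative_eq_intros)
      have "DERIV (\<lambda>v. G (v + pi) - G v) x :> gd (x + pi) * 1 - gd x"
        by (rule DERIV_diff[OF d1 Gder])
      then show "DERIV (\<lambda>v. G (v + pi) - G v) x :> 0" by (simp add: gdper)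
    qed
    then have "G (u + pi) - G u = G (0 + pi) - G 0" by (rule DERIV_isconst_all)
    then show ?thesis using \<open>G pi - G 0 = 0\<close> by simp
  qed
  obtain Cg where Cg: "\<And>u. \<bar>G u\<bar> \<le> Cg" using per_bounded[OF Gc Gper] by blast
  show ?thesis
    using Gder Gper gdlip Gd Cg Cf Gc fc by blast
qed

lemma pointwise:
  fixes g gd :: "real \<Rightarrow> real"
  assumes gder: "\<And>u. (g has_real_derivative gd u) (at u)"
    and glip: "\<And>a b. \<bar>gd a - gd b\<bar> \<le> Lg * \<bar>a - b\<bar>"
    and gper: "\<And>u. g (u + pi) = g u" and gdb: "\<And>u. \<bar>gd u\<bar> \<le> Gd"
    and s: "s = 1 \<or> s = -1" and x: "nm X \<le> 1/50"
  shows "\<bar>g (Smap (s *\<^sub>R mexp X) t) - g t - gd t * psi X t\<bar> \<le> (4 * Lg + 40 * Gd) * (nm X)\<^sup>2"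
proof -
  obtain j :: int and \<delta> where j: "Smap (s *\<^sub>R mexp X) t = t + \<delta> + j * pi"
    and d1: "\<bar>\<delta> - psi X t\<bar> \<le> 40 * (nm X)\<^sup>2" and d2: "\<bar>\<delta>\<bar> \<le> 2 * nm X"
    using smap_expand[OF s x, of t] by blast
  have Lg0: "Lg \<ge> 0" using glip[of 1 0] by simp
  have Gd0: "Gd \<ge> 0" using gdb[of 0] by simp
  have e0: "g (Smap (s *\<^sub>R mexp X) t) = g (t + \<delta>)"
    unfolding j using per_int[where g=g, OF gper] by simp
  have e1: "\<bar>g (t + \<delta>) - g t - gd t * \<delta>\<bar> \<le> Lg * \<delta>\<^sup>2" by (rule taylor_g[OF gder glip])
  have "\<delta>\<^sup>2 \<le> (2 * nm X)\<^sup>2" using d2 by (metis abs_le_square_iff abs_mult abs_numeral abs_of_nonneg nm_nonneg)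
  then have "Lg * \<delta>\<^sup>2 \<le> Lg * (4 * (nm X)\<^sup>2)" using Lg0 by (intro mult_left_mono) (auto simp: power_mult_distrib)
  then have e1': "\<bar>g (t + \<delta>) - g t - gd t * \<delta>\<bar> \<le> 4 * Lg * (nm X)\<^sup>2" using e1 by simp
  have "\<bar>gd t * \<delta> - gd t * psi X t\<bar> = \<bar>gd t\<bar> * \<bar>\<delta> - psi X t\<bar>" by (simp add: abs_mult right_diff_distrib[symmetric])
  also have "\<dots> \<le> Gd * (40 * (nm X)\<^sup>2)" using gdb[of t] d1 by (intro mult_mono) auto
  finally have e2: "\<bar>gd t * \<delta> - gd t * psi X t\<bar> \<le> 40 * Gd * (nm X)\<^sup>2" by simp
  show ?thesis using e0 e1' e2 by (simp add: algebra_simps)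
qed

lemma Arg_borel[measurable]: "Arg \<in> borel_measurable borel"
proof -
  have eq: "Arg = (\<lambda>z. if z \<in> - \<real>\<^sub>\<le>\<^sub>0 then Arg z else (if z = 0 then 0 else pi))"
  proof
    fix z :: complex
    show "Arg z = (if z \<in> - \<real>\<^sub>\<le>\<^sub>0 then Arg z else (if z = 0 then 0 else pi))"
    proof (cases "z \<in> - \<real>\<^sub>\<le>\<^sub>0")
      case False
      then have "z \<in> \<real>\<^sub>\<le>\<^sub>0" by simp
      then show ?thesis using False
      proof (cases "z = 0")
        case False
        then show ?thesis using \<open>z \<in> \<real>\<^sub>\<le>\<^sub>0\<close>
          by (auto simp: Arg_eq_pi_iff nonpos_Reals_def complex_is_Real_iff complex_eq_iff)
      qed (simp add: Arg_zero)
    qed simp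
  qed
  have o: "open (- \<real>\<^sub>\<le>\<^sub>0 :: complex set)" by (simp add: open_Compl)
  have m1: "(\<lambda>z. if z = 0 then 0 else pi) \<in> borel_measurable (borel :: complex measure)"
    by measurable
  have o2: "{x. x \<notin> \<real>\<^sub>\<le>\<^sub>0} \<in> sets (borel :: complex measure)"
    using o borel_open[OF o] by (simp add: Compl_eq)
  have c1: "Arg \<in> borel_measurable (restrict_space borel {x. x \<in> - \<real>\<^sub>\<le>\<^sub>0})"
    by (rule borel_measurable_continuous_on_restrict) (rule continuous_on_subset[OF continuous_on_Arg], auto)
  have c2: "(\<lambda>z::complex. if z = 0 then 0 else pi) \<in> borel_measurable (restrict_space borel {x. x \<notin> - \<real>\<^sub>\<le>\<^sub>0})"
    using measurable_restrict_space1[OF m1] by blast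
  show ?thesis
    apply (subst eq)
    apply (subst measurable_If_restrict_space_iff)
    using o2 c1 c2 by auto
qed

lemma entry_meas[measurable]:
  assumes [measurable]: "T \<in> borel_measurable p"
  shows "(\<lambda>\<sigma>. (T \<sigma> :: mat2) $ i $ j) \<in> borel_measurable p"
proof -
  have "continuous_on UNIV (\<lambda>x::mat2. x $ i $ j)"
    by (intro linear_continuous_on bounded_linear_compose[OF bounded_linear_vec_nth bounded_linear_vec_nth])
  then show ?thesis by (rule borel_measurable_continuous_on) measurable
qed

lemma conj_meas:
  fixes T :: "'s \<Rightarrow> mat2"
  assumes T: "T \<in> borel_measurable p"
  shows "(\<lambda>\<sigma>. (M ** T \<sigma> ** N :: mat2) $ i $ j) \<in> borel_measurable p"
proof -
  have [measurable]: "(\<lambda>\<sigma>. T \<sigma> $ a $ b) \<in> borel_measurable p" for a b using entry_meas[OF T] .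
  show ?thesis by (simp add: matrix_matrix_mult_def sum_2) measurable
qed

lemma Smap_entries: "Smap A t = Arg (Complex (A$1$1 * cos t + A$1$2 * sin t) (A$2$1 * cos t + A$2$2 * sin t))"
  by (simp add: Smap_def matrix_vector_mult_def sum_2 evec_def)

lemma Smap_meas:
  fixes T :: "'s \<Rightarrow> mat2"
  assumes T: "T \<in> borel_measurable p"
  shows "(\<lambda>(s, x). Smap (M ** T s ** N) x) \<in> borel_measurable (p \<Otimes>\<^sub>M borel)"
proof -
  have [measurable]: "(\<lambda>\<sigma>. (M ** T \<sigma> ** N :: mat2) $ a $ b) \<in> borel_measurable p" for a b
    by (rule conj_meas[OF T])
  have [measurable]: "(\<lambda>(a, b). Complex a b) \<in> borel_measurable (borel \<Otimes>\<^sub>M borel)"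
  proof -
    have "(\<lambda>(a, b). Complex a b) = (\<lambda>z. complex_of_real (fst z) + \<i> * complex_of_real (snd z))"
      by (auto simp: fun_eq_iff complex_eq_iff)
    moreover have "(\<lambda>z::real\<times>real. complex_of_real (fst z) + \<i> * complex_of_real (snd z)) \<in> borel_measurable (borel \<Otimes>\<^sub>M borel)"
      by measurable
    ultimately show ?thesis by simp
  qed
  show ?thesis unfolding Smap_entries by measurable
qed

lemma psi_bl: "bounded_linear (\<lambda>A. psi A t)"
proof (rule bounded_linear_intro[where K=4])
  show "psi (x + y) t = psi x t + psi y t" for x y by (simp add: psi_def algebra_simps)
  show "psi (r *\<^sub>R x) t = r *\<^sub>R psi x t" for r x by (simp add: psi_def algebra_simps)
  show "norm (psi x t) \<le> norm x * 4" for x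
    using psi_bound[of x t] nm_le_norm[of x] by simp
qed

lemma psi_scale: "psi (c *\<^sub>R A) t = c * psi A t"
  by (simp add: psi_def algebra_simps)

lemma series_norm:
  fixes a :: "nat \<Rightarrow> real" and Q :: "nat \<Rightarrow> mat2"
  assumes l0: "0 < lam0" and l: "0 < lam" "lam \<le> lam0"
    and sm: "summable (\<lambda>k. lam0 powr a k * norm (Q k))" and ae: "\<And>k. e \<le> a k"
  shows "summable (\<lambda>k. norm (lam powr a k *\<^sub>R Q k))"
    and "(\<Sum>k. norm (lam powr a k *\<^sub>R Q k)) \<le> (lam/lam0) powr e * (\<Sum>k. lam0 powr a k * norm (Q k))"
proof -
  define q where "q = lam / lam0"
  have q0: "0 < q" and q1: "q \<le> 1" using l0 l by (auto simp: q_def)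
  have lam_eq: "lam powr x = q powr x * lam0 powr x" for x
    using l0 l by (simp add: q_def powr_divide)
  have tb: "norm (lam powr a k *\<^sub>R Q k) \<le> q powr e * (lam0 powr a k * norm (Q k))" for k
  proof -
    have "norm (lam powr a k *\<^sub>R Q k) = q powr a k * (lam0 powr a k * norm (Q k))"
      by (simp add: lam_eq mult.assoc)
    also have "\<dots> \<le> q powr e * (lam0 powr a k * norm (Q k))"
      using q0 q1 ae[of k] by (intro mult_right_mono powr_mono') auto
    finally show ?thesis .
  qed
  have sm2: "summable (\<lambda>k. q powr e * (lam0 powr a k * norm (Q k)))" using sm by (rule summable_mult)
  show s: "summable (\<lambda>k. norm (lam powr a k *\<^sub>R Q k))"
    by (rule summable_comparison_test[OF _ sm2]) (use tb in auto)
  have "(\<Sum>k. norm (lam powr a k *\<^sub>R Q k)) \<le> (\<Sum>k. q powr e * (lam0 powr a k * norm (Q k)))"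
    by (rule suminf_le[OF tb s sm2])
  also have "\<dots> = q powr e * (\<Sum>k. lam0 powr a k * norm (Q k))" by (rule suminf_mult[OF sm])
  finally show "(\<Sum>k. norm (lam powr a k *\<^sub>R Q k)) \<le> (lam/lam0) powr e * (\<Sum>k. lam0 powr a k * norm (Q k))"
    by (simp add: q_def)
qed

lemma tail_le:
  fixes c :: "nat \<Rightarrow> real"
  assumes "summable c" "\<And>k. 0 \<le> c k"
  shows "(\<Sum>k. c (k + n)) \<le> (\<Sum>k. c k)"
proof -
  have "(\<Sum>k. c k) = (\<Sum>k. c (k + n)) + (\<Sum>i<n. c i)" by (rule suminf_split_initial_segment[OF assms(1)])
  moreover have "0 \<le> (\<Sum>i<n. c i)" using assms(2) by (simp add: sum_nonneg)
  ultimately show ?thesis by simp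
qed

lemma X_props:
  fixes a :: "nat \<Rightarrow> real" and Q :: "nat \<Rightarrow> mat2"
  assumes l0: "0 < lam0" and l: "0 < lam" "lam \<le> lam0"
    and sm: "summable (\<lambda>k. lam0 powr a k * norm (Q k))" and sB: "(\<Sum>k. lam0 powr a k * norm (Q k)) \<le> B"
    and amono: "\<And>k. a 0 \<le> a k" and an: "\<And>k. n \<le> k \<Longrightarrow> e \<le> a k"
  shows "nm (\<Sum>k. lam powr a k *\<^sub>R Q k) \<le> 4 * (lam/lam0) powr (a 0) * B"
    and "\<bar>psi (\<Sum>k. lam powr a k *\<^sub>R Q k) t - (\<Sum>k<n. lam powr a k * psi (Q k) t)\<bar> \<le> 4 * (lam/lam0) powr e * B"
proof -
  define X where "X = (\<Sum>k. lam powr a k *\<^sub>R Q k)"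
  have qe: "0 \<le> (lam/lam0) powr x" for x by simp
  note s1 = series_norm(1)[OF l0 l sm amono] and b1 = series_norm(2)[OF l0 l sm amono]
  have sX: "summable (\<lambda>k. lam powr a k *\<^sub>R Q k)" by (rule summable_norm_cancel[OF s1])
  have "nm X \<le> 4 * norm X" by (rule nm_le_norm)
  also have "norm X \<le> (\<Sum>k. norm (lam powr a k *\<^sub>R Q k))" unfolding X_def by (rule summable_norm[OF s1])
  also have "\<dots> \<le> (lam/lam0) powr (a 0) * B"
    using b1 sB qe[of "a 0"] by (meson mult_left_mono order_trans)
  finally show "nm (\<Sum>k. lam powr a k *\<^sub>R Q k) \<le> 4 * (lam/lam0) powr (a 0) * B"
    unfolding X_def by simp
  define b where "b k = lam powr a k * psi (Q k) t" for k
  have pX: "psi X t = (\<Sum>k. b k)"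
    unfolding X_def b_def using bounded_linear.suminf[OF psi_bl sX] by (simp add: psi_scale)
  have bb: "\<bar>b k\<bar> \<le> 4 * norm (lam powr a k *\<^sub>R Q k)" for k
    using psi_bound[of "lam powr a k *\<^sub>R Q k" t] nm_le_norm[of "lam powr a k *\<^sub>R Q k"]
    by (simp add: b_def psi_scale)
  have sb: "summable b"
    by (rule summable_comparison_test[OF _ summable_mult[OF s1, of 4]]) (use bb in auto)
  have split: "(\<Sum>k. b k) = (\<Sum>k. b (k + n)) + (\<Sum>k<n. b k)"
    by (rule suminf_split_initial_segment[OF sb])
  have sm': "summable (\<lambda>k. lam0 powr a (k + n) * norm (Q (k + n)))"
    using sm summable_iff_shift[of "\<lambda>k. lam0 powr a k * norm (Q k)" n] by blast
  have an': "\<And>k. e \<le> a (k + n)" using an by simp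
  note s2 = series_norm(1)[OF l0 l sm', of e] and b2 = series_norm(2)[OF l0 l sm', of e]
  have "\<bar>\<Sum>k. b (k + n)\<bar> \<le> (\<Sum>k. 4 * norm (lam powr a (k + n) *\<^sub>R Q (k + n)))"
  proof -
    have s4: "summable (\<lambda>k. 4 * norm (lam powr a (k + n) *\<^sub>R Q (k + n)))"
      using summable_mult[OF s2 [OF an'], of 4] by simp
    have sab: "summable (\<lambda>k. \<bar>b (k + n)\<bar>)"
      by (rule summable_comparison_test[OF _ s4]) (use bb in auto)
    have "\<bar>\<Sum>k. b (k + n)\<bar> \<le> (\<Sum>k. \<bar>b (k + n)\<bar>)"
      using summable_norm[OF sab[unfolded real_norm_def[symmetric]]] by simp
    also have "\<dots> \<le> (\<Sum>k. 4 * norm (lam powr a (k + n) *\<^sub>R Q (k + n)))"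
      by (rule suminf_le[OF _ sab s4]) (use bb in auto)
    finally show ?thesis .
  qed
  also have "\<dots> = 4 * (\<Sum>k. norm (lam powr a (k + n) *\<^sub>R Q (k + n)))"
    by (rule suminf_mult[OF s2[OF an']])
  also have "\<dots> \<le> 4 * ((lam/lam0) powr e * (\<Sum>k. lam0 powr a (k + n) * norm (Q (k + n))))"
    using b2[OF an'] by simp
  also have "\<dots> \<le> 4 * ((lam/lam0) powr e * B)"
  proof -
    have "(\<Sum>k. lam0 powr a (k + n) * norm (Q (k + n))) \<le> (\<Sum>k. lam0 powr a k * norm (Q k))"
      by (rule tail_le[OF sm, of n]) simp
    then show ?thesis using sB qe[of e] by (intro mult_left_mono) (auto intro: order_trans)
  qed
  finally have "\<bar>\<Sum>k. b (k + n)\<bar> \<le> 4 * (lam/lam0) powr e * B" by simp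
  then show "\<bar>psi (\<Sum>k. lam powr a k *\<^sub>R Q k) t - (\<Sum>k<n. lam powr a k * psi (Q k) t)\<bar> \<le> 4 * (lam/lam0) powr e * B"
    using pX split unfolding X_def b_def by simp
qed

lemma eta_le:
  fixes \<eta> :: "nat \<Rightarrow> real"
  assumes em: "\<And>k. 1 \<le> k \<Longrightarrow> \<eta> k < \<eta> (Suc k)" and i: "1 \<le> i" and ij: "i \<le> j"
  shows "\<eta> i \<le> \<eta> j"
  using ij
proof (induction rule: dec_induct)
  case base then show ?case by simp
next
  case (step n)
  then show ?case using em[of n] i by simp
qed

lemma psi_pfun: "trace A = 0 \<Longrightarrow> psi A t = pfun A t"
proof -
  assume "trace A = 0"
  then have "A$2$2 = - A$1$1" by (simp add: trace_def sum_2)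
  moreover have "sin (2 * t) = 2 * sin t * cos t" by (rule sin_double)
  ultimately show ?thesis by (simp add: psi_def pfun_def algebra_simps)
qed

lemma term_le_suminf:
  fixes f :: "nat \<Rightarrow> real"
  assumes "summable f" "\<And>k. 0 \<le> f k"
  shows "f j \<le> suminf f"
  using sum_le_suminf[OF assms(1), of "{j}"] assms(2) by simp

theorem proposition1:
  fixes p :: "'s measure"
    and T :: "real \<Rightarrow> 's \<Rightarrow> mat2"
    and M :: mat2
    and \<eta> :: "nat \<Rightarrow> real"
    and P :: "nat \<Rightarrow> 's \<Rightarrow> mat2"
    and K Kc :: nat
    and \<mu> \<theta>0 :: real
    and f :: "real \<Rightarrow> real"
  assumes prob: "prob_space p"
    and T_meas: "\<And>lam. T lam \<in> borel_measurable p"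
    and P_meas: "\<And>k. P k \<in> borel_measurable p"
    and T_SL2: "\<And>lam \<sigma>. det (T lam \<sigma>) = 1"
    and M_SL2: "det M = 1"
    and eta_pos: "0 < \<eta> 1"
    and eta_mono: "\<And>k. 1 \<le> k \<Longrightarrow> \<eta> k < \<eta> (Suc k)"
    and P_sl2: "\<And>k \<sigma>. trace (P k \<sigma>) = 0"
    and expansion: "\<exists>lam0>0. \<exists>C B.
        (\<forall>lam\<in>{0..lam0}. \<forall>\<sigma>\<in>space p. norm (T lam \<sigma>) \<le> C)
      \<and> (\<forall>\<sigma>\<in>space p. summable (\<lambda>k. lam0 powr \<eta> (Suc k) * norm (P (Suc k) \<sigma>))
                     \<and> (\<Sum>k. lam0 powr \<eta> (Suc k) * norm (P (Suc k) \<sigma>)) \<le> B)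
      \<and> (\<forall>lam\<in>{0..lam0}. \<forall>\<sigma>\<in>space p. \<exists>s\<in>{1, -1::real}.
           M ** T lam \<sigma> ** matrix_inv M
             = s *\<^sub>R mexp (\<Sum>k. (lam powr \<eta> (Suc k)) *\<^sub>R P (Suc k) \<sigma>))"
    and K_twice: "\<eta> K = 2 * \<eta> 1"
    and K_next: "\<eta> (Suc K) \<le> \<eta> 1 + \<eta> 2"
    and P_nontriv: "\<And>k. 1 \<le> k \<Longrightarrow> k < K \<Longrightarrow> measure p {\<sigma>\<in>space p. P k \<sigma> = 0} < 1"
    and Kc_range: "1 \<le> Kc" "Kc < K"
    and E_zero: "\<And>k. 1 \<le> k \<Longrightarrow> k < Kc \<Longrightarrow> integral\<^sup>L p (P k) = 0"
    and E_Kc_nz: "integral\<^sup>L p (P Kc) \<noteq> 0"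
    and elliptic: "det (integral\<^sup>L p (P Kc)) > 0"
    and mu_const: "\<And>\<theta>. integral\<^sup>L p (\<lambda>\<sigma>. pfun (P Kc \<sigma>) \<theta>) = \<mu>"
    and mu_nz: "\<mu> \<noteq> 0"
    and f_C1: "f C1_differentiable_on UNIV"
    and f_per: "\<And>\<theta>. f (\<theta> + pi) = f \<theta>"
  shows "\<exists>C lam1. 0 < lam1 \<and>
     (\<forall>lam\<in>{0<..<lam1}. \<forall>N\<ge>1.
        \<bar>I_N p (%\<sigma>. Smap (M ** T lam \<sigma> ** matrix_inv M)) \<theta>0 f N
          - integral {0..pi} (\<lambda>\<theta>. f \<theta> / pi)\<bar>
        \<le> C * (lam powr (\<eta> (LEAST k. Kc < k \<and> (integral\<^sup>L p (P k) \<noteq> 0 \<or> k = K)) - \<eta> Kc)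
               + 1 / (lam powr \<eta> Kc * real N)))"
proof -
  interpret PS: prob_space p by (rule prob)
  obtain lam0 B where lam0: "lam0 > 0"
    and sB: "\<And>\<sigma>. \<sigma> \<in> space p \<Longrightarrow> summable (\<lambda>k. lam0 powr \<eta> (Suc k) * norm (P (Suc k) \<sigma>))
                     \<and> (\<Sum>k. lam0 powr \<eta> (Suc k) * norm (P (Suc k) \<sigma>)) \<le> B"
    and rep: "\<And>lam \<sigma>. lam \<in> {0..lam0} \<Longrightarrow> \<sigma> \<in> space p \<Longrightarrow> \<exists>s\<in>{1, -1::real}.
           M ** T lam \<sigma> ** matrix_inv M = s *\<^sub>R mexp (\<Sum>k. (lam powr \<eta> (Suc k)) *\<^sub>R P (Suc k) \<sigma>)"
  proof -
    from expansion obtain lam0 where l0: "lam0 > 0" and ex: "\<exists>C B.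
        (\<forall>lam\<in>{0..lam0}. \<forall>\<sigma>\<in>space p. norm (T lam \<sigma>) \<le> C)
      \<and> (\<forall>\<sigma>\<in>space p. summable (\<lambda>k. lam0 powr \<eta> (Suc k) * norm (P (Suc k) \<sigma>))
                     \<and> (\<Sum>k. lam0 powr \<eta> (Suc k) * norm (P (Suc k) \<sigma>)) \<le> B)
      \<and> (\<forall>lam\<in>{0..lam0}. \<forall>\<sigma>\<in>space p. \<exists>s\<in>{1, -1::real}.
           M ** T lam \<sigma> ** matrix_inv M
             = s *\<^sub>R mexp (\<Sum>k. (lam powr \<eta> (Suc k)) *\<^sub>R P (Suc k) \<sigma>))" by blast
    from ex obtain C B where h: "(\<forall>\<sigma>\<in>space p. summable (\<lambda>k. lam0 powr \<eta> (Suc k) * norm (P (Suc k) \<sigma>))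
                     \<and> (\<Sum>k. lam0 powr \<eta> (Suc k) * norm (P (Suc k) \<sigma>)) \<le> B)"
      "(\<forall>lam\<in>{0..lam0}. \<forall>\<sigma>\<in>space p. \<exists>s\<in>{1, -1::real}.
           M ** T lam \<sigma> ** matrix_inv M
             = s *\<^sub>R mexp (\<Sum>k. (lam powr \<eta> (Suc k)) *\<^sub>R P (Suc k) \<sigma>))" by blast
    show ?thesis using that[OF l0] h by blast
  qed
  obtain \<sigma>0 where \<sigma>0: "\<sigma>0 \<in> space p" using PS.not_empty by blast
  have B0: "0 \<le> B"
    using sB[OF \<sigma>0] suminf_nonneg[of "\<lambda>k. lam0 powr \<eta> (Suc k) * norm (P (Suc k) \<sigma>0)"] by force
  have eta_le': "\<And>i j. 1 \<le> i \<Longrightarrow> i \<le> j \<Longrightarrow> \<eta> i \<le> \<eta> j"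
    by (rule eta_le[where \<eta>=\<eta>, OF eta_mono])
  have K2: "2 \<le> K" using Kc_range by simp
  define Kp where "Kp = (LEAST k. Kc < k \<and> (integral\<^sup>L p (P k) \<noteq> 0 \<or> k = K))"
  have Kp1: "Kc < Kp \<and> (integral\<^sup>L p (P Kp) \<noteq> 0 \<or> Kp = K)"
    unfolding Kp_def by (rule LeastI[of _ K]) (use Kc_range in simp)
  have Kp2: "Kp \<le> K"
    unfolding Kp_def by (rule Least_le) (use Kc_range in simp)
  have Kp3: "\<And>k. Kc < k \<Longrightarrow> k < Kp \<Longrightarrow> integral\<^sup>L p (P k) = 0"
  proof -
    fix k assume a: "Kc < k" "k < Kp"
    have "\<not> (Kc < k \<and> (integral\<^sup>L p (P k) \<noteq> 0 \<or> k = K))"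
      using not_less_Least[OF a(2)[unfolded Kp_def]] .
    then show "integral\<^sup>L p (P k) = 0" using a Kp2 by auto
  qed
  define D where "D k = B / lam0 powr \<eta> k" for k
  have Pb: "norm (P k \<sigma>) \<le> D k" if k1: "1 \<le> k" and sp: "\<sigma> \<in> space p" for k \<sigma>
  proof -
    obtain j where kj: "k = Suc j" using k1 Suc_pred[of k] by (metis One_nat_def Suc_le_eq)
    have "lam0 powr \<eta> (Suc j) * norm (P (Suc j) \<sigma>) \<le> (\<Sum>k. lam0 powr \<eta> (Suc k) * norm (P (Suc k) \<sigma>))"
      by (rule term_le_suminf) (use sB[OF sp] in auto)
    also have "\<dots> \<le> B" using sB[OF sp] by auto
    finally show ?thesis using lam0 unfolding kj D_def by (simp add: field_simps)
  qed
  have Pint: "integrable p (P k)" if "1 \<le> k" for k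
    by (rule PS.integrable_const_bound[where B="D k"]) (use Pb[OF that] P_meas in auto)
  have EPb: "norm (integral\<^sup>L p (P k)) \<le> D k" if "1 \<le> k" for k
  proof -
    have "norm (integral\<^sup>L p (P k)) \<le> integral\<^sup>L p (\<lambda>\<sigma>. norm (P k \<sigma>))" by (rule integral_norm_bound)
    also have "\<dots> \<le> integral\<^sup>L p (\<lambda>\<sigma>. D k)"
      by (rule integral_mono) (use Pint[OF that] Pb[OF that] in auto)
    finally show ?thesis by (simp add: PS.prob_space)
  qed
  define m where "m = integral {0..pi} (\<lambda>\<theta>. f \<theta> / pi)"
  define gd where "gd = (\<lambda>\<theta>. (f \<theta> - m) / \<mu>)"
  obtain g Lg Gd Cg Cf where gder: "\<And>u. (g has_real_derivative gd u) (at u)" and gper: "\<And>u. g (u + pi) = g u"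
     and glip: "\<And>a b. \<bar>gd a - gd b\<bar> \<le> Lg * \<bar>a - b\<bar>" and gdb: "\<And>u. \<bar>gd u\<bar> \<le> Gd" and gb: "\<And>u. \<bar>g u\<bar> \<le> Cg"
     and fb: "\<And>u. \<bar>f u\<bar> \<le> Cf" and gc: "continuous_on UNIV g" and fc: "continuous_on UNIV f"
    using f_props[OF f_C1 f_per mu_nz] unfolding m_def[symmetric] gd_def by blast
  have Lg0: "0 \<le> Lg" using glip[of 1 0] by simp
  have Gd0: "0 \<le> Gd" using gdb[of 0] by simp
  have Cg0: "0 \<le> Cg" using gb[of 0] by simp
  have gm: "g \<in> borel_measurable borel" using gc by (rule borel_measurable_continuous_onI)
  have fm: "f \<in> borel_measurable borel" using fc by (rule borel_measurable_continuous_onI)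
  define Cp where "Cp = 4 * Lg + 40 * Gd"
  define E1 where "E1 = Cp * 16 * B\<^sup>2 + Gd * 4 * B"
  define E0 where "E0 = E1 + 4 * Gd * B * K"
  define E2 where "E2 = E0 / lam0 powr \<eta> Kp"
  have E2_0: "0 \<le> E2" unfolding E2_def E0_def E1_def Cp_def using Lg0 Gd0 B0 by simp
  define \<epsilon> where "\<epsilon> = 1 / (200 * (B + 1))"
  have \<epsilon>0: "0 < \<epsilon>" "\<epsilon> \<le> 1" using B0 by (auto simp: \<epsilon>_def)
  define lam1 where "lam1 = lam0 * \<epsilon> powr (1 / \<eta> 1)"
  have lam1_pos: "0 < lam1" using lam0 \<epsilon>0 by (simp add: lam1_def)
  have lam1_le: "lam1 \<le> lam0"
  proof -
    have "\<epsilon> powr (1 / \<eta> 1) \<le> 1" using \<epsilon>0 eta_pos by (intro powr_le1) auto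
    then show ?thesis using lam0 unfolding lam1_def by (simp add: mult_left_le)
  qed
  have main: "\<bar>I_N p (%\<sigma>. Smap (M ** T lam \<sigma> ** matrix_inv M)) \<theta>0 f N - m\<bar>
      \<le> 2 * Cg / (lam powr \<eta> Kc * N) + E2 * lam powr (\<eta> Kp - \<eta> Kc)"
    if lam: "lam \<in> {0<..<lam1}" and N: "N \<ge> 1" for lam N
  proof -
    have l0: "0 < lam" and l1: "lam < lam1" using lam by auto
    have l2: "lam \<le> lam0" using l1 lam1_le by simp
    define S where "S = (\<lambda>\<sigma>. Smap (M ** T lam \<sigma> ** matrix_inv M))"
    have Sm: "(\<lambda>(s, x). S s x) \<in> borel_measurable (p \<Otimes>\<^sub>M borel)"
      unfolding S_def by (rule Smap_meas[OF T_meas])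
    define q where "q = lam / lam0"
    have q0: "0 < q" and q1: "q \<le> 1" using l0 l2 lam0 by (auto simp: q_def)
    have lam_q: "lam powr e = q powr e * lam0 powr e" for e
      using l0 lam0 by (simp add: q_def powr_divide)
    have qK: "q powr \<eta> K = (q powr \<eta> 1)\<^sup>2"
      using K_twice by (simp add: power2_eq_square powr_add[symmetric])
    have qsmall: "4 * q powr \<eta> 1 * B \<le> 1/50"
    proof -
      have "q < \<epsilon> powr (1 / \<eta> 1)" using l1 lam0 by (simp add: q_def lam1_def divide_less_eq mult.commute)
      then have "q powr \<eta> 1 < (\<epsilon> powr (1 / \<eta> 1)) powr \<eta> 1"
        using q0 eta_pos by (intro powr_less_mono2) auto
      also have "\<dots> = \<epsilon>" using eta_pos \<epsilon>0 by (simp add: powr_powr)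
      finally have "q powr \<eta> 1 \<le> \<epsilon>" by simp
      then have "4 * q powr \<eta> 1 * B \<le> 4 * \<epsilon> * B" using B0 by (simp add: mult_right_mono)
      also have "\<dots> \<le> 1/50" using B0 by (simp add: \<epsilon>_def field_simps)
      finally show ?thesis .
    qed
    define X where "X \<sigma> = (\<Sum>k. lam powr \<eta> (Suc k) *\<^sub>R P (Suc k) \<sigma>)" for \<sigma>
    define F where "F \<sigma> x = (\<Sum>k<K-1. lam powr \<eta> (Suc k) * psi (P (Suc k) \<sigma>) x)" for \<sigma> x
    have am: "\<eta> (Suc 0) \<le> \<eta> (Suc k)" for k by (rule eta_le') auto
    have an: "K - 1 \<le> k \<Longrightarrow> \<eta> K \<le> \<eta> (Suc k)" for k by (rule eta_le') (use K2 in auto)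
    have Xb: "nm (X \<sigma>) \<le> 4 * q powr \<eta> 1 * B" if sp: "\<sigma> \<in> space p" for \<sigma>
      using X_props(1)[OF lam0 l0 l2, of "\<lambda>k. \<eta> (Suc k)" "\<lambda>k. P (Suc k) \<sigma>" B "K - 1" "\<eta> K"] sB[OF sp] am an
      unfolding X_def q_def by auto
    have Xt: "\<bar>psi (X \<sigma>) x - F \<sigma> x\<bar> \<le> 4 * q powr \<eta> K * B" if sp: "\<sigma> \<in> space p" for \<sigma> x
      using X_props(2)[OF lam0 l0 l2, of "\<lambda>k. \<eta> (Suc k)" "\<lambda>k. P (Suc k) \<sigma>" B "K - 1" "\<eta> K" x] sB[OF sp] am an
      unfolding X_def F_def q_def by auto
    have rep': "\<exists>s. (s = 1 \<or> s = -1) \<and> S \<sigma> = Smap (s *\<^sub>R mexp (X \<sigma>))" if sp: "\<sigma> \<in> space p" for \<sigma>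
      using rep[of lam \<sigma>] l0 l2 sp unfolding S_def X_def by auto
    have pw: "\<bar>g (S \<sigma> x) - g x - gd x * F \<sigma> x\<bar> \<le> E1 * q powr \<eta> K" if sp: "\<sigma> \<in> space p" for \<sigma> x
    proof -
      obtain s where s: "s = 1 \<or> s = -1" and Seq: "S \<sigma> = Smap (s *\<^sub>R mexp (X \<sigma>))" using rep'[OF sp] by blast
      have nX: "nm (X \<sigma>) \<le> 1/50" using Xb[OF sp] qsmall by linarith
      have p1: "\<bar>g (S \<sigma> x) - g x - gd x * psi (X \<sigma>) x\<bar> \<le> Cp * (nm (X \<sigma>))\<^sup>2"
        using pointwise[OF gder glip gper gdb s nX, of x] Seq unfolding Cp_def by simp
      have "(nm (X \<sigma>))\<^sup>2 \<le> (4 * q powr \<eta> 1 * B)\<^sup>2"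
        using Xb[OF sp] nm_nonneg[of "X \<sigma>"] by (intro power_mono) auto
      also have "\<dots> = 16 * B\<^sup>2 * q powr \<eta> K" by (simp add: qK power_mult_distrib)
      finally have "Cp * (nm (X \<sigma>))\<^sup>2 \<le> Cp * (16 * B\<^sup>2 * q powr \<eta> K)"
        using Lg0 Gd0 by (intro mult_left_mono) (auto simp: Cp_def)
      with p1 have p1': "\<bar>g (S \<sigma> x) - g x - gd x * psi (X \<sigma>) x\<bar> \<le> Cp * (16 * B\<^sup>2 * q powr \<eta> K)" by linarith
      have "\<bar>gd x * psi (X \<sigma>) x - gd x * F \<sigma> x\<bar> = \<bar>gd x\<bar> * \<bar>psi (X \<sigma>) x - F \<sigma> x\<bar>"
        by (simp add: abs_mult right_diff_distrib[symmetric])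
      also have "\<dots> \<le> Gd * (4 * q powr \<eta> K * B)"
        using gdb[of x] Xt[OF sp, of x] by (intro mult_mono) auto
      finally have p2: "\<bar>gd x * psi (X \<sigma>) x - gd x * F \<sigma> x\<bar> \<le> Gd * (4 * q powr \<eta> K * B)" .
      have "\<bar>g (S \<sigma> x) - g x - gd x * F \<sigma> x\<bar> \<le> Cp * (16 * B\<^sup>2 * q powr \<eta> K) + Gd * (4 * q powr \<eta> K * B)"
        using p1' p2 by linarith
      also have "\<dots> = E1 * q powr \<eta> K" by (simp add: E1_def algebra_simps)
      finally show ?thesis .
    qed
    have e: "\<bar>Qop p S g x - g x - lam powr \<eta> Kc * (f x - m)\<bar> \<le> E2 * lam powr \<eta> Kp" for x
    proof -
      have gS_int: "integrable p (\<lambda>\<sigma>. g (S \<sigma> x))" by (rule Qop_bound(2)[OF prob Sm gm gb])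
      have psi_int: "integrable p (\<lambda>\<sigma>. psi (P j \<sigma>) x)" if "1 \<le> j" for j
        by (rule integrable_bounded_linear[OF psi_bl Pint[OF that]])
      have F_int: "integrable p (\<lambda>\<sigma>. F \<sigma> x)"
        unfolding F_def by (intro Bochner_Integration.integrable_sum integrable_mult_right psi_int) simp
      define h where "h k = lam powr \<eta> (Suc k) * psi (integral\<^sup>L p (P (Suc k))) x" for k
      have EF: "integral\<^sup>L p (\<lambda>\<sigma>. F \<sigma> x) = (\<Sum>k<K-1. h k)"
        unfolding F_def h_def
        by (subst Bochner_Integration.integral_sum)
           (auto intro!: integrable_mult_right psi_int simp: integral_bounded_linear[OF psi_bl Pint])
      define err where "err \<sigma> = g (S \<sigma> x) - g x - gd x * F \<sigma> x" for \<sigma>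
      have err_int: "integrable p err"
        unfolding err_def using gS_int F_int by auto
      have ierr: "integral\<^sup>L p err = Qop p S g x - g x - gd x * (\<Sum>k<K-1. h k)"
        unfolding err_def Qop_def using gS_int F_int EF by (simp add: PS.prob_space)
      have berr: "\<bar>integral\<^sup>L p err\<bar> \<le> E1 * q powr \<eta> K"
        using prob_int_bound(1)[OF prob borel_measurable_integrable[OF err_int], of "E1 * q powr \<eta> K"] pw
        unfolding err_def by auto
      have hz: "h k = 0" if "k < Kp - 1" "Suc k \<noteq> Kc" for k
      proof -
        have "integral\<^sup>L p (P (Suc k)) = 0"
        proof (cases "Suc k < Kc")
          case True then show ?thesis by (intro E_zero) auto
        next
          case False then show ?thesis using that by (intro Kp3) auto
        qed
        then show ?thesis by (simp add: h_def psi_def)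
      qed
      have hKc: "h (Kc - 1) = lam powr \<eta> Kc * \<mu>"
      proof -
        have SK: "Suc (Kc - 1) = Kc" using Kc_range by simp
        have "psi (integral\<^sup>L p (P Kc)) x = (\<integral>\<sigma>. psi (P Kc \<sigma>) x \<partial>p)"
          using integral_bounded_linear[OF psi_bl Pint, of Kc] Kc_range by simp
        also have "\<dots> = (\<integral>\<sigma>. pfun (P Kc \<sigma>) x \<partial>p)" by (simp add: psi_pfun P_sl2)
        also have "\<dots> = \<mu>" by (rule mu_const)
        finally show ?thesis unfolding h_def SK by simp
      qed
      have split: "(\<Sum>k<K-1. h k) = (\<Sum>k<Kp-1. h k) + (\<Sum>k\<in>{Kp-1..<K-1}. h k)"
      proof -
        have eq: "{..<K-1} = {..<Kp-1} \<union> {Kp-1..<K-1}" using Kp2 by auto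
        have "(\<Sum>k<K-1. h k) = sum h ({..<Kp-1} \<union> {Kp-1..<K-1})" by (simp only: eq)
        also have "\<dots> = (\<Sum>k<Kp-1. h k) + (\<Sum>k\<in>{Kp-1..<K-1}. h k)"
          by (rule sum.union_disjoint) auto
        finally show ?thesis .
      qed
      have first: "(\<Sum>k<Kp-1. h k) = lam powr \<eta> Kc * \<mu>"
      proof -
        have mem: "Kc - 1 \<in> {..<Kp-1}" using Kp1 Kc_range by auto
        have "(\<Sum>k<Kp-1. h k) = h (Kc - 1) + (\<Sum>k\<in>{..<Kp-1} - {Kc - 1}. h k)"
          by (rule sum.remove[OF _ mem]) simp
        also have "(\<Sum>k\<in>{..<Kp-1} - {Kc - 1}. h k) = 0"
        proof (rule sum.neutral, rule ballI)
          fix k assume "k \<in> {..<Kp-1} - {Kc - 1}"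
          then have "k < Kp - 1" "Suc k \<noteq> Kc" using Kc_range by auto
          then show "h k = 0" by (rule hz)
        qed
        finally show ?thesis using hKc by simp
      qed
      have hb: "\<bar>h k\<bar> \<le> 4 * B * q powr \<eta> Kp" if "k \<in> {Kp-1..<K-1}" for k
      proof -
        have k1: "1 \<le> Suc k" by simp
        have "\<bar>h k\<bar> = lam powr \<eta> (Suc k) * \<bar>psi (integral\<^sup>L p (P (Suc k))) x\<bar>"
          by (simp add: h_def abs_mult)
        also have "\<dots> \<le> lam powr \<eta> (Suc k) * (4 * D (Suc k))"
        proof (intro mult_left_mono)
          show "\<bar>psi (integral\<^sup>L p (P (Suc k))) x\<bar> \<le> 4 * D (Suc k)"
            using psi_bound[of "integral\<^sup>L p (P (Suc k))" x] nm_le_norm[of "integral\<^sup>L p (P (Suc k))"] EPb[OF k1]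
            by linarith
        qed simp
        also have "\<dots> = 4 * B * q powr \<eta> (Suc k)"
          using lam0 by (simp add: D_def lam_q)
        also have "\<dots> \<le> 4 * B * q powr \<eta> Kp"
        proof -
          have "\<eta> Kp \<le> \<eta> (Suc k)" using that Kp1 Kc_range by (intro eta_le') auto
          then have "q powr \<eta> (Suc k) \<le> q powr \<eta> Kp" using q0 q1 by (intro powr_mono') auto
          then show ?thesis using B0 by (intro mult_left_mono) auto
        qed
        finally show ?thesis .
      qed
      have rest: "\<bar>\<Sum>k\<in>{Kp-1..<K-1}. h k\<bar> \<le> 4 * B * K * q powr \<eta> Kp"
      proof -
        have "\<bar>\<Sum>k\<in>{Kp-1..<K-1}. h k\<bar> \<le> (\<Sum>k\<in>{Kp-1..<K-1}. \<bar>h k\<bar>)" by (rule sum_abs)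
        also have "\<dots> \<le> of_nat (card {Kp-1..<K-1}) * (4 * B * q powr \<eta> Kp)"
          by (rule sum_bounded_above) (rule hb)
        also have "\<dots> \<le> of_nat K * (4 * B * q powr \<eta> Kp)"
          using B0 by (intro mult_right_mono) auto
        finally show ?thesis by (simp add: algebra_simps)
      qed
      have key: "Qop p S g x - g x - lam powr \<eta> Kc * (f x - m)
           = integral\<^sup>L p err + gd x * (\<Sum>k\<in>{Kp-1..<K-1}. h k)"
      proof -
        have "gd x * (lam powr \<eta> Kc * \<mu>) = lam powr \<eta> Kc * (f x - m)"
          using mu_nz by (simp add: gd_def)
        then show ?thesis unfolding ierr split first by (simp add: algebra_simps)
      qed
      have "\<bar>Qop p S g x - g x - lam powr \<eta> Kc * (f x - m)\<bar>
           \<le> E1 * q powr \<eta> K + Gd * (4 * B * K * q powr \<eta> Kp)"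
      proof -
        have "\<bar>gd x * (\<Sum>k\<in>{Kp-1..<K-1}. h k)\<bar> \<le> Gd * (4 * B * K * q powr \<eta> Kp)"
          unfolding abs_mult using gdb[of x] rest by (intro mult_mono) auto
        then show ?thesis unfolding key using berr by linarith
      qed
      also have "\<dots> \<le> E0 * q powr \<eta> Kp"
      proof -
        have "\<eta> Kp \<le> \<eta> K" using Kp1 Kp2 Kc_range by (intro eta_le') auto
        then have "q powr \<eta> K \<le> q powr \<eta> Kp" using q0 q1 by (intro powr_mono') auto
        moreover have "0 \<le> E1" using Lg0 Gd0 B0 by (simp add: E1_def Cp_def)
        ultimately have "E1 * q powr \<eta> K \<le> E1 * q powr \<eta> Kp" by (intro mult_left_mono)
        then show ?thesis by (simp add: E0_def algebra_simps)
      qed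
      also have "\<dots> = E2 * lam powr \<eta> Kp"
        using lam0 by (simp add: E2_def lam_q)
      finally show ?thesis .
    qed
    have "\<bar>I_N p S \<theta>0 f N - m\<bar> \<le> 2 * Cg / (lam powr \<eta> Kc * N) + E2 * lam powr \<eta> Kp / lam powr \<eta> Kc"
      by (rule telescope[OF prob Sm fm fb gm gb _ e N]) (use l0 in simp)
    also have "E2 * lam powr \<eta> Kp / lam powr \<eta> Kc = E2 * lam powr (\<eta> Kp - \<eta> Kc)"
      by (simp add: powr_diff)
    finally show ?thesis unfolding S_def .
  qed
  show ?thesis
  proof (intro exI conjI ballI allI impI)
    show "0 < lam1" by (rule lam1_pos)
    fix lam N assume lam: "lam \<in> {0<..<lam1}" and N: "(1::nat) \<le> N"
    have a: "0 \<le> lam powr (\<eta> Kp - \<eta> Kc)" "0 \<le> 1 / (lam powr \<eta> Kc * real N)" by auto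
    have "2 * Cg / (lam powr \<eta> Kc * N) = 2 * Cg * (1 / (lam powr \<eta> Kc * N))" by simp
    also have "\<dots> \<le> (2 * Cg + E2) * (1 / (lam powr \<eta> Kc * N))"
      using E2_0 a by (intro mult_right_mono) auto
    finally have b1: "2 * Cg / (lam powr \<eta> Kc * N) \<le> (2 * Cg + E2) * (1 / (lam powr \<eta> Kc * N))" .
    have b2: "E2 * lam powr (\<eta> Kp - \<eta> Kc) \<le> (2 * Cg + E2) * lam powr (\<eta> Kp - \<eta> Kc)"
      using Cg0 a by (intro mult_right_mono) auto
    show "\<bar>I_N p (%\<sigma>. Smap (M ** T lam \<sigma> ** matrix_inv M)) \<theta>0 f N - integral {0..pi} (\<lambda>\<theta>. f \<theta> / pi)\<bar>
        \<le> (2 * Cg + E2) * (lam powr (\<eta> (LEAST k. Kc < k \<and> (integral\<^sup>L p (P k) \<noteq> 0 \<or> k = K)) - \<eta> Kc)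
               + 1 / (lam powr \<eta> Kc * real N))"
      using main[OF lam N] b1 b2 unfolding m_def[symmetric] Kp_def[symmetric] by (simp add: distrib_left)
  qed
qed

end
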